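(* Let $N\ge2$, $\xi=\exp(\pi\sqrt{-1}/N)$, and let $V_1,V_2$ each be one of the $\mathcal U_q(sl_2)$-modules $W_m$ ($m\ge1$) or $\mathcal Y_m^{\pm}$ ($1\le m\le N-1$). For generic $q$ the universal $R$-matrix $R=q^{\frac12H\otimes H}\sum_{n\ge0}\frac{\{1\}_q^{2n}}{\{n\}_q!}q^{\frac{n(n-1)}2}E^n\otimes F^n$ acts on $V_1\otimes V_2$, and this action can be specialized at $q=\xi$ (its matrix entries have well-defined values at $q=\xi$). The resulting action coincides with the action of the $R$-matrix $\xi^{\frac12H\otimes H}\sum_{n=0}^{N-1}\frac{\{1\}^{2n}}{\{n\}!}\xi^{\frac{n(n-1)}2}E^n\otimes F^n$ of $\overline{\mathcal U}_\xi(sl_2)$ on the specialized modules.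
   Context: $\{n\}_q=q^n-q^{-n}$, $\{n\}_q!=\prod_{k=1}^n\{k\}_q$, $[n]_q=\{n\}_q/\{1\}_q$, $[n]_q!=\prod_{k=1}^n[k]_q$, $\left[\begin{smallmatrix}n\\ k\end{smallmatrix}\right]_q=\frac{[n]_q!}{[k]_q![n-k]_q!}$; $\{n\}$, $\{n\}!$ are values at $q=\xi$; $\xi^{1/2}=e^{\pi\sqrt{-1}/2N}$. $\mathcal U_q(sl_2)$ is the Hopf algebra generated by $K^{\pm1},E,F$ with $KEK^{-1}=q^2E$, $KFK^{-1}=q^{-2}F$, $EF-FE=(K-K^{-1})/(q-q^{-1})$, $\Delta(K)=K\otimes K$, $\Delta(E)=1\otimes E+E\otimes K$, $\Delta(F)=K^{-1}\otimes F+F\otimes 1$; $H$ is an element with $q^H=K$ (acting on a weight vector of $K$-eigenvalue $q^h$ by $h$). $\overline{\mathcal U}_\xi(sl_2)=\mathcal U_\xi(sl_2)/(E^N,F^N,K^{2N}-1)$, and in its $R$-matrix $H$ acts on weight vectors with $\xi^H=K$, $HE-EH=2E$, $HF-FH=-2F$, and $Hv=0$ whenever $Kv=v$. $W_m$: basis $f_0,\dots,f_{m-1}$, $Ef_i=[i]_qf_{i-1}$, $Ff_i=[m-1-i]_qf_{i+1}$, $Kf_i=q^{m-1-2i}f_i$. $\mathcal Y_m^+$: basis $\alpha_0,\dots,\alpha_{2N-m-1},\beta_0,\dots,\beta_{m-1}$, with $E\alpha_i=[i]_q\alpha_{i-1}$ for $i\le N-m$ or $i\ge N+1$, $E\alpha_i=[i]_q\alpha_{i-1}+\left[\begin{smallmatrix}2N-m-i-1\\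 N-i\end{smallmatrix}\right]_q\beta_{m-N+i-1}$ for $N-m+1\le i\le N$, $E\beta_i=[i]_q\beta_{i-1}$, $F\alpha_i=[2N-m-i-1]_q\alpha_{i+1}$ for $i\ne N-m-1$, $F\alpha_{N-m-1}=[N]_q\alpha_{N-m}+\left[\begin{smallmatrix}N-1\\ m-1\end{smallmatrix}\right]_q\beta_0$, $F\beta_i=[m-i-1]_q\beta_{i+1}$, $K\alpha_i=q^{2N-m-1-2i}\alpha_i$, $K\beta_i=q^{m-1-2i}\beta_i$. $\mathcal Y_m^-$: basis $\alpha_0,\dots,\alpha_{2N+m-1},\beta_0,\dots,\beta_{2N-m-1}$, with $E\alpha_i=[i]_q\alpha_{i-1}$ for $i\le m$ or $i\ge2N+1$, $E\alpha_i=[i]_q\alpha_{i-1}+\left[\begin{smallmatrix}2N+m-1-i\\ 2N-i\end{smallmatrix}\right]_q\beta_{i-m-1}$ for $m+1\le i\le 2N$, $E\beta_i=[i]_q\beta_{i-1}$, $F\alpha_i=[2N+m-1-i]_q\alpha_{i+1}$ for $i\ne m-1$, $F\alpha_{m-1}=[2N]_q\alpha_m+\left[\begin{smallmatrix}2N-1\\ 2N-m-1\end{smallmatrix}\right]_q\beta_0$, $F\beta_i=[2N-m-1-i]_q\beta_{i+1}$, $K\alpha_i=q^{2N+m-1-2i}\alpha_i$, $K\beta_i=q^{2N-m-1-2i}\beta_i$ (indices out of range give $0$). *)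

theory Defs
  imports "HOL-Analysis.Analysis"
begin

definition qcurly :: "nat \<Rightarrow> complex \<Rightarrow> complex" where
  "qcurly n q = q ^ n - inverse q ^ n"

definition qcurly_fact :: "nat \<Rightarrow> complex \<Rightarrow> complex" where
  "qcurly_fact n q = (\<Prod>k=1..n. qcurly k q)"

definition qint :: "nat \<Rightarrow> complex \<Rightarrow> complex" where
  "qint n q = qcurly n q / qcurly 1 q"

definition qint_fact :: "nat \<Rightarrow> complex \<Rightarrow> complex" where
  "qint_fact n q = (\<Prod>k=1..n. qint k q)"

definition qbinom :: "nat \<Rightarrow> nat \<Rightarrow> complex \<Rightarrow> complex" where
  "qbinom n k q = qint_fact n q / (qint_fact k q * qint_fact (n - k) q)"

datatype qmod = W nat | Yp nat | Ym nat

fun admissible :: "nat \<Rightarrow> qmod \<Rightarrow> bool" where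
  "admissible N (W m) = (1 \<le> m)"
| "admissible N (Yp m) = (1 \<le> m \<and> m \<le> N - 1)"
| "admissible N (Ym m) = (1 \<le> m \<and> m \<le> N - 1)"

text \<open>Basis indexing: W_m: f_i = index i.
  Y_m^+: alpha_i = index i (i < 2N-m), beta_k = index 2N-m+k (k < m).
  Y_m^-: alpha_i = index i (i < 2N+m), beta_k = index 2N+m+k (k < 2N-m).\<close>
fun qdim :: "nat \<Rightarrow> qmod \<Rightarrow> nat" where
  "qdim N (W m) = m"
| "qdim N (Yp m) = 2*N"
| "qdim N (Ym m) = 4*N"

text \<open>Weight h of basis vector j (K acts by q^h).\<close>
fun qwt :: "nat \<Rightarrow> qmod \<Rightarrow> nat \<Rightarrow> int" where
  "qwt N (W m) j = int m - 1 - 2 * int j"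
| "qwt N (Yp m) j = (if j < 2*N - m then int (2*N) - int m - 1 - 2 * int j
                     else int m - 1 - 2 * int (j - (2*N - m)))"
| "qwt N (Ym m) j = (if j < 2*N + m then int (2*N) + int m - 1 - 2 * int j
                     else int (2*N) - int m - 1 - 2 * int (j - (2*N + m)))"

text \<open>Ematq N V q i j = coefficient of basis vector i in E (basis vector j).\<close>
fun Ematq :: "nat \<Rightarrow> qmod \<Rightarrow> complex \<Rightarrow> nat \<Rightarrow> nat \<Rightarrow> complex" where
  "Ematq N (W m) q i j = (if j < m \<and> i + 1 = j then qint j q else 0)"
| "Ematq N (Yp m) q i j =
     (let A = 2*N - m in
      if j < A then
        (if i + 1 = j then qint j q else 0)
        + (if N - m + 1 \<le> j \<and> j \<le> N \<and> i = A + (m + j - N - 1)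
           then qbinom (2*N - m - j - 1) (N - j) q else 0)
      else if j < A + m then
        (if A \<le> i \<and> i + 1 = j then qint (j - A) q else 0)
      else 0)"
| "Ematq N (Ym m) q i j =
     (let A = 2*N + m in
      if j < A then
        (if i + 1 = j then qint j q else 0)
        + (if m + 1 \<le> j \<and> j \<le> 2*N \<and> i = A + (j - m - 1)
           then qbinom (2*N + m - 1 - j) (2*N - j) q else 0)
      else if j < A + (2*N - m) then
        (if A \<le> i \<and> i + 1 = j then qint (j - A) q else 0)
      else 0)"

text \<open>Fmatq N V q i j = coefficient of basis vector i in F (basis vector j).
  (Note F alpha_{N-m-1} on Y_m^+ has alpha-coefficient [N] = [2N-m-(N-m-1)-1],
   and similarly for Y_m^-, so the alpha-part is uniform.)\<close>
fun Fmatq :: "nat \<Rightarrow> qmod \<Rightarrow> complex \<Rightarrow> nat \<Rightarrow> nat \<Rightarrow> complex" where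
  "Fmatq N (W m) q i j = (if i < m \<and> i = j + 1 then qint (m - 1 - j) q else 0)"
| "Fmatq N (Yp m) q i j =
     (let A = 2*N - m in
      if j < A then
        (if i < A \<and> i = j + 1 then qint (2*N - m - j - 1) q else 0)
        + (if j = N - m - 1 \<and> i = A then qbinom (N - 1) (m - 1) q else 0)
      else if j < A + m then
        (if i < A + m \<and> i = j + 1 then qint (m - (j - A) - 1) q else 0)
      else 0)"
| "Fmatq N (Ym m) q i j =
     (let A = 2*N + m in
      if j < A then
        (if i < A \<and> i = j + 1 then qint (2*N + m - 1 - j) q else 0)
        + (if j = m - 1 \<and> i = A then qbinom (2*N - 1) (2*N - m - 1) q else 0)
      else if j < A + (2*N - m) then
        (if i < A + (2*N - m) \<and> i = j + 1 then qint (2*N - m - 1 - (j - A)) q else 0)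
      else 0)"

fun mpow :: "nat \<Rightarrow> (nat \<Rightarrow> nat \<Rightarrow> complex) \<Rightarrow> nat \<Rightarrow> nat \<Rightarrow> nat \<Rightarrow> complex" where
  "mpow d M 0 i j = (if i = j then 1 else 0)"
| "mpow d M (Suc n) i j = (\<Sum>k<d. M i k * mpow d M n k j)"

definition xi :: "nat \<Rightarrow> complex" where
  "xi N = exp (pi * \<i> / of_nat N)"

definition xi_half :: "nat \<Rightarrow> complex" where
  "xi_half N = exp (pi * \<i> / of_nat (2 * N))"

text \<open>Specialized modules: matrix entries at q = xi are the values at q = xi of
  the (rational, removable-singularity) entries, i.e. their limits.\<close>
definition Emat_spec :: "nat \<Rightarrow> qmod \<Rightarrow> nat \<Rightarrow> nat \<Rightarrow> complex" where
  "Emat_spec N V i j = Lim (at (xi N)) (\<lambda>q. Ematq N V q i j)"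

definition Fmat_spec :: "nat \<Rightarrow> qmod \<Rightarrow> nat \<Rightarrow> nat \<Rightarrow> complex" where
  "Fmat_spec N V i j = Lim (at (xi N)) (\<lambda>q. Fmatq N V q i j)"

definition Rcoef :: "nat \<Rightarrow> complex \<Rightarrow> complex" where
  "Rcoef n q = qcurly 1 q ^ (2*n) / qcurly_fact n q * q ^ (n * (n - 1) div 2)"

text \<open>Generic R-matrix entry on V1 \<otimes> V2, as a function of s = q^{1/2}:
  coefficient of f_{i1} \<otimes> f_{i2} in R (f_{j1} \<otimes> f_{j2}), where
  q^{H\<otimes>H/2} acts on f_{i1} \<otimes> f_{i2} by s^{h1 h2}.\<close>
definition Rgen :: "nat \<Rightarrow> qmod \<Rightarrow> qmod \<Rightarrow> complex \<Rightarrow> nat \<Rightarrow> nat \<Rightarrow> nat \<Rightarrow> nat \<Rightarrow> complex" where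
  "Rgen N V1 V2 s i1 i2 j1 j2 =
     s powi (qwt N V1 i1 * qwt N V2 i2) *
     (\<Sum>n. Rcoef n (s^2) * mpow (qdim N V1) (Ematq N V1 (s^2)) n i1 j1
                        * mpow (qdim N V2) (Fmatq N V2 (s^2)) n i2 j2)"

text \<open>R-matrix of the restricted quantum group at q = xi acting on the specialized
  modules (H acts on the weight vector f_i by its weight h_i, xi^H = K).\<close>
definition Rres :: "nat \<Rightarrow> qmod \<Rightarrow> qmod \<Rightarrow> nat \<Rightarrow> nat \<Rightarrow> nat \<Rightarrow> nat \<Rightarrow> complex" where
  "Rres N V1 V2 i1 i2 j1 j2 =
     xi_half N powi (qwt N V1 i1 * qwt N V2 i2) *
     (\<Sum>n<N. Rcoef n (xi N) * mpow (qdim N V1) (Emat_spec N V1) n i1 j1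
                        * mpow (qdim N V2) (Fmat_spec N V2) n i2 j2)"

end

theory Submission
  imports Defs "HOL-Complex_Analysis.Cauchy_Integral_Formula"
begin


definition shE :: "nat \<Rightarrow> nat \<Rightarrow> nat \<Rightarrow> (nat\<Rightarrow>complex) \<Rightarrow> (nat\<Rightarrow>complex) \<Rightarrow> (nat\<Rightarrow>complex) \<Rightarrow> nat \<Rightarrow> nat \<Rightarrow> complex" where
"shE A B s a e c i l = (if i < A then (if l = Suc i \<and> l < A then a l else 0)
   else if i < A + B then (if l = Suc i \<and> l < A + B then e (l - A) else 0)
      + (if l < A \<and> s \<le> l \<and> i = A + (l - s) then c l else 0) else 0)"

lemma sum_delta_mult: "(\<Sum>l<(d::nat). (if l = p then x else 0) * (v l::complex)) = (if p < d then x * v p else 0)"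
proof -
  have "(\<Sum>l<d. (if l = p then x else 0) * (v l::complex)) = (\<Sum>l<d. if l = p then x * v p else 0)"
    by (rule sum.cong) auto
  then show ?thesis by (simp add: sum.delta)
qed

lemma rowE_lt:
  assumes "i < A"
  shows "(\<Sum>l<A+B. shE A B s a e c i l * v l) = (if Suc i < A then a (Suc i) * v (Suc i) else 0)"
proof -
  have "(\<Sum>l<A+B. shE A B s a e c i l * v l) = (\<Sum>l<A+B. (if l = Suc i then (if Suc i < A then a (Suc i) else 0) else 0) * v l)"
    by (rule sum.cong) (use assms in \<open>auto simp: shE_def\<close>)
  then show ?thesis by (simp add: sum_delta_mult)
qed

lemma rowE_mid:
  assumes "A \<le> i" "i < A + B"
  shows "(\<Sum>l<A+B. shE A B s a e c i l * v l) = (if Suc i < A + B then e (Suc i - A) * v (Suc i) else 0)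
     + (if i - A + s < A then c (i - A + s) * v (i - A + s) else 0)"
proof -
  have "(\<Sum>l<A+B. shE A B s a e c i l * v l) = (\<Sum>l<A+B. (if l = Suc i then (if Suc i < A + B then e (Suc i - A) else 0) else 0) * v l
      + (if l = i - A + s then (if i - A + s < A then c (i - A + s) else 0) else 0) * v l)"
    by (rule sum.cong) (use assms in \<open>auto simp: shE_def distrib_right\<close>)
  then show ?thesis using assms by (simp add: sum.distrib sum_delta_mult)
qed

lemma rowE_hi:
  assumes "A + B \<le> i"
  shows "(\<Sum>l<A+B. shE A B s a e c i l * v l) = 0"
  using assms by (simp add: shE_def)

definition cfE :: "nat \<Rightarrow> nat \<Rightarrow> nat \<Rightarrow> (nat\<Rightarrow>complex) \<Rightarrow> (nat\<Rightarrow>complex) \<Rightarrow> (nat\<Rightarrow>complex) \<Rightarrow> nat \<Rightarrow> nat \<Rightarrow> nat \<Rightarrow> complex" where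
"cfE A B s a e c n i j =
 (if j < A then
   (if i < A then (if i + n = j then \<Prod>t<n. a (j - t) else 0)
    else if (i - A) + s + n = Suc j then
       (\<Sum>b<n. if s \<le> j - b \<and> j - b < s + B then (\<Prod>t<b. a (j - t)) * c (j - b) * (\<Prod>t<n - Suc b. e (j - b - s - t)) else 0)
    else 0)
  else (if i < A then 0 else if i + n = j then \<Prod>t<n. e (j - A - t) else 0))"

lemma prod_lessThan_Suc_last: "(\<Prod>t<Suc n. f t) = (\<Prod>t<n. f t) * (f n::complex)"
  by simp

lemma mpow_shE:
  assumes "i < A + B" and jd: "j < A + B"
  shows "mpow (A+B) (shE A B s a e c) n i j = cfE A B s a e c n i j"
  using assms(1)
proof (induction n arbitrary: i)
  case 0
  then show ?case by (auto simp: cfE_def)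
next
  case (Suc n)
  have rec: "mpow (A+B) (shE A B s a e c) (Suc n) i j = (\<Sum>l<A+B. shE A B s a e c i l * mpow (A+B) (shE A B s a e c) n l j)"
    by simp
  show ?case
  proof (cases "i < A")
    case True
    have "mpow (A+B) (shE A B s a e c) (Suc n) i j = (if Suc i < A then a (Suc i) * cfE A B s a e c n (Suc i) j else 0)"
      unfolding rec rowE_lt[OF True] using Suc.IH[of "Suc i"] by auto
    also have "\<dots> = cfE A B s a e c (Suc n) i j"
    proof (cases "j < A")
      case jA: True
      show ?thesis
      proof (cases "i + Suc n = j")
        case True
        then have "j - n = Suc i" by simp
        then show ?thesis using True jA \<open>i < A\<close> by (simp add: cfE_def mult.commute)
      qed (use jA \<open>i<A\<close> in \<open>auto simp: cfE_def\<close>)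
    qed (use True in \<open>auto simp: cfE_def\<close>)
    finally show ?thesis .
  next
    case False
    then have iA: "A \<le> i" by simp
    have "mpow (A+B) (shE A B s a e c) (Suc n) i j =
       (if Suc i < A + B then e (Suc i - A) * cfE A B s a e c n (Suc i) j else 0)
     + (if i - A + s < A then c (i - A + s) * cfE A B s a e c n (i - A + s) j else 0)"
      unfolding rec rowE_mid[OF iA Suc.prems] using Suc.IH[of "Suc i"] Suc.IH[of "i - A + s"] by auto
    also have "\<dots> = cfE A B s a e c (Suc n) i j"
    proof (cases "j < A")
      case jA: False
      show ?thesis
      proof (cases "i + Suc n = j")
        case True
        then have "j - A - n = Suc i - A" using iA by simp
        then show ?thesis using True jA iA Suc.prems jd by (simp add: cfE_def mult.commute)
      qed (use jA iA in \<open>auto simp: cfE_def\<close>)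
    next
      case jA: True
      show ?thesis
      proof (cases "i - A + s + n = j")
        case cond: True
        define G where "G = (\<lambda>m b. if s \<le> j - b \<and> j - b < s + B then (\<Prod>t<b. a (j - t)) * c (j - b) * (\<Prod>t<m - Suc b. e (j - b - s - t)) else 0)"
        have c1: "Suc i - A + s + n = Suc j" using cond iA by simp
        have c2: "i - A + s + Suc n = Suc j" using cond by simp
        have lhs: "(if Suc i < A + B then e (Suc i - A) * cfE A B s a e c n (Suc i) j else 0)
             = (\<Sum>b<n. G (Suc n) b)"
        proof (cases "Suc i < A + B")
          case True
          have "e (Suc i - A) * cfE A B s a e c n (Suc i) j = e (Suc i - A) * (\<Sum>b<n. G n b)"
            using c1 jA iA by (simp add: cfE_def G_def)
          also have "\<dots> = (\<Sum>b<n. G (Suc n) b)"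
            unfolding sum_distrib_left
          proof (rule sum.cong)
            fix b assume "b \<in> {..<n}"
            then have bn: "b < n" by simp
            have e1: "Suc n - Suc b = Suc (n - Suc b)" using bn by simp
            show "e (Suc i - A) * G n b = G (Suc n) b"
            proof (cases "s \<le> j - b \<and> j - b < s + B")
              case True
              have "j - b - s - (n - Suc b) = Suc i - A" using True cond bn iA by simp
              then show ?thesis using True unfolding G_def e1 prod_lessThan_Suc_last by (simp add: ac_simps)
            next
              case False
              show ?thesis unfolding G_def by (simp only: if_not_P[OF False] mult_zero_right)
            qed
          qed simp
          finally show ?thesis using True by simp
        next
          case False
          have "G (Suc n) b = 0" if "b < n" for b
            using False that cond iA by (auto simp: G_def)
          then show ?thesis using False by simp
        qed
        have rhs2: "(if i - A + s < A then c (i - A + s) * cfE A B s a e c n (i - A + s) j else 0) = G (Suc n) n"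
        proof -
          have l: "i - A + s < A" using cond jA by simp
          have "j - n = i - A + s" using cond by simp
          moreover have "s \<le> j - n \<and> j - n < s + B" using cond Suc.prems iA by linarith
          ultimately show ?thesis using l cond jA by (simp add: G_def cfE_def mult.commute)
        qed
        have "cfE A B s a e c (Suc n) i j = (\<Sum>b<Suc n. G (Suc n) b)"
          using c2 jA iA by (simp add: cfE_def G_def)
        then show ?thesis using lhs rhs2 by simp
      next
        case False
        then show ?thesis using jA iA by (auto simp: cfE_def)
      qed
    qed
    finally show ?thesis .
  qed
qed

definition shF :: "nat \<Rightarrow> nat \<Rightarrow> nat \<Rightarrow> (nat\<Rightarrow>complex) \<Rightarrow> (nat\<Rightarrow>complex) \<Rightarrow> complex \<Rightarrow> nat \<Rightarrow> nat \<Rightarrow> complex" where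
"shF A B p a e c0 i l = (if l < A then (if i < A \<and> i = Suc l then a l else 0) + (if l = p \<and> i = A \<and> 0 < B then c0 else 0)
   else if l < A + B then (if i < A + B \<and> i = Suc l then e (l - A) else 0) else 0)"

lemma rowF_lt:
  assumes "i < A"
  shows "(\<Sum>l<A+B. shF A B p a e c0 i l * v l) = (if 0 < i then a (i - 1) * v (i - 1) else 0)"
proof -
  have "(\<Sum>l<A+B. shF A B p a e c0 i l * v l) = (\<Sum>l<A+B. (if l = i - 1 then (if 0 < i then a (i - 1) else 0) else 0) * v l)"
    by (rule sum.cong) (use assms in \<open>auto simp: shF_def\<close>)
  then show ?thesis using assms by (simp add: sum_delta_mult)
qed

lemma rowF_A:
  shows "(\<Sum>l<A+B. shF A B p a e c0 A l * v l) = (if p < A \<and> 0 < B then c0 * v p else 0)"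
proof -
  have "(\<Sum>l<A+B. shF A B p a e c0 A l * v l) = (\<Sum>l<A+B. (if l = p then (if p < A \<and> 0 < B then c0 else 0) else 0) * v l)"
    by (rule sum.cong) (auto simp: shF_def)
  then show ?thesis by (auto simp: sum_delta_mult)
qed

lemma rowF_mid:
  assumes "A < i" "i < A + B"
  shows "(\<Sum>l<A+B. shF A B p a e c0 i l * v l) = e (i - 1 - A) * v (i - 1)"
proof -
  have "(\<Sum>l<A+B. shF A B p a e c0 i l * v l) = (\<Sum>l<A+B. (if l = i - 1 then e (i - 1 - A) else 0) * v l)"
    by (rule sum.cong) (use assms in \<open>auto simp: shF_def\<close>)
  then show ?thesis using assms by (simp add: sum_delta_mult)
qed

definition cfF :: "nat \<Rightarrow> nat \<Rightarrow> nat \<Rightarrow> (nat\<Rightarrow>complex) \<Rightarrow> (nat\<Rightarrow>complex) \<Rightarrow> complex \<Rightarrow> nat \<Rightarrow> nat \<Rightarrow> nat \<Rightarrow> complex" where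
"cfF A B p a e c0 n i j =
 (if j < A then
    (if i < A then (if i = j + n then \<Prod>t<n. a (j + t) else 0)
     else if j \<le> p \<and> p < A \<and> 0 < B \<and> n = (p - j) + Suc (i - A) then (\<Prod>t<p - j. a (j + t)) * c0 * (\<Prod>t<i - A. e t) else 0)
  else (if i < A then 0 else if i = j + n then \<Prod>t<n. e (j - A + t) else 0))"

lemma mpow_shF:
  assumes "i < A + B" and jd: "j < A + B"
  shows "mpow (A+B) (shF A B p a e c0) n i j = cfF A B p a e c0 n i j"
  using assms(1)
proof (induction n arbitrary: i)
  case 0
  then show ?case by (auto simp: cfF_def)
next
  case (Suc n)
  have rec: "mpow (A+B) (shF A B p a e c0) (Suc n) i j = (\<Sum>l<A+B. shF A B p a e c0 i l * mpow (A+B) (shF A B p a e c0) n l j)"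
    by simp
  consider "i < A" | "i = A" | "A < i" by linarith
  then show ?case
  proof cases
    case 1
    show ?thesis
    proof (cases "0 < i")
      case True
      have "mpow (A+B) (shF A B p a e c0) (Suc n) i j = a (i - 1) * cfF A B p a e c0 n (i - 1) j"
        unfolding rec rowF_lt[OF 1] using Suc.IH[of "i - 1"] True 1 by auto
      also have "\<dots> = cfF A B p a e c0 (Suc n) i j"
      proof (cases "j < A \<and> i = j + Suc n")
        case True
        then have "j + n = i - 1" by simp
        then show ?thesis using True 1 by (simp add: cfF_def mult.commute)
      qed (use 1 \<open>0 < i\<close> in \<open>auto simp: cfF_def\<close>)
      finally show ?thesis .
    next
      case False
      then show ?thesis unfolding rec rowF_lt[OF 1] using 1 by (auto simp: cfF_def)
    qed
  next
    case 2
    show ?thesis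
    proof (cases "p < A \<and> 0 < B")
      case True
      have "mpow (A+B) (shF A B p a e c0) (Suc n) i j = c0 * cfF A B p a e c0 n p j"
        unfolding rec using Suc.IH[of p] True 2 rowF_A[of A B p a e c0 "\<lambda>k. mpow (A+B) (shF A B p a e c0) n k j"] by auto
      also have "\<dots> = cfF A B p a e c0 (Suc n) i j"
      proof (cases "j < A \<and> p = j + n")
        case True
        then show ?thesis using True 2 \<open>p < A \<and> 0 < B\<close> by (auto simp: cfF_def mult.commute)
      qed (use 2 \<open>p < A \<and> 0 < B\<close> in \<open>auto simp: cfF_def\<close>)
      finally show ?thesis .
    next
      case False
      then show ?thesis unfolding rec using 2 rowF_A[of A B p a e c0 "\<lambda>k. mpow (A+B) (shF A B p a e c0) n k j"] by (auto simp: cfF_def)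
    qed
  next
    case 3
    have "mpow (A+B) (shF A B p a e c0) (Suc n) i j = e (i - 1 - A) * cfF A B p a e c0 n (i - 1) j"
      unfolding rec rowF_mid[OF 3 Suc.prems] using Suc.IH[of "i - 1"] Suc.prems by auto
    also have "\<dots> = cfF A B p a e c0 (Suc n) i j"
    proof (cases "j < A")
      case True
      have ia: "i - A = Suc (i - 1 - A)" using 3 by simp
      show ?thesis
      proof (cases "j \<le> p \<and> p < A \<and> 0 < B \<and> n = (p - j) + Suc (i - 1 - A)")
        case c: True
        then show ?thesis using True 3 unfolding cfF_def ia by (simp add: ac_simps)
      next
        case c: False
        then show ?thesis using True 3 unfolding cfF_def ia by auto
      qed
    next
      case False
      show ?thesis
      proof (cases "i = j + Suc n")
        case True
        then have "j - A + n = i - 1 - A" using False by simp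
        then show ?thesis using True False 3 by (simp add: cfF_def mult.commute)
      qed (use False 3 in \<open>auto simp: cfF_def\<close>)
    qed
    finally show ?thesis .
  qed
qed




definition qbinom' :: "nat \<Rightarrow> nat \<Rightarrow> complex \<Rightarrow> complex" where
  "qbinom' a b q = (\<Prod>k\<in>{b<..a}. qint k q) / qint_fact (a - b) q"

fun shapeE :: "nat \<Rightarrow> qmod \<Rightarrow> (nat\<Rightarrow>nat\<Rightarrow>complex) \<Rightarrow> (nat\<Rightarrow>complex) \<Rightarrow> nat \<Rightarrow> nat \<Rightarrow> complex" where
  "shapeE N (W m) qb qi = shE m 0 0 qi (\<lambda>k. 0) (\<lambda>l. 0)"
| "shapeE N (Yp m) qb qi = shE (2*N-m) m (N+1-m) qi qi (\<lambda>l. if N-m+1 \<le> l \<and> l \<le> N then qb (2*N-m-l-1) (N-l) else 0)"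
| "shapeE N (Ym m) qb qi = shE (2*N+m) (2*N-m) (m+1) qi qi (\<lambda>l. if m+1 \<le> l \<and> l \<le> 2*N then qb (2*N+m-1-l) (2*N-l) else 0)"

fun shapeF :: "nat \<Rightarrow> qmod \<Rightarrow> (nat\<Rightarrow>nat\<Rightarrow>complex) \<Rightarrow> (nat\<Rightarrow>complex) \<Rightarrow> nat \<Rightarrow> nat \<Rightarrow> complex" where
  "shapeF N (W m) qb qi = shF m 0 0 (\<lambda>l. qi (m-1-l)) (\<lambda>k. 0) 0"
| "shapeF N (Yp m) qb qi = shF (2*N-m) m (N-m-1) (\<lambda>l. qi (2*N-m-l-1)) (\<lambda>k. qi (m-k-1)) (qb (N-1) (m-1))"
| "shapeF N (Ym m) qb qi = shF (2*N+m) (2*N-m) (m-1) (\<lambda>l. qi (2*N+m-1-l)) (\<lambda>k. qi (2*N-m-1-k)) (qb (2*N-1) (2*N-m-1))"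

lemma Ematq_shape_W:
  "Ematq N (W m) q i j = shapeE N (W m) (\<lambda>a b. qbinom a b q) (\<lambda>k. qint k q) i j"
  by (auto simp: shE_def)

lemma Ematq_shape_Yp:
  assumes "2 \<le> N" "1 \<le> m" "m \<le> N - 1"
  shows "Ematq N (Yp m) q i j = shapeE N (Yp m) (\<lambda>a b. qbinom a b q) (\<lambda>k. qint k q) i j"
proof -
  define A where "A = 2*N - m"
  have A: "2*N - m = A" "N + 1 - m \<le> N" "N < A" using assms by (auto simp: A_def)
  show ?thesis
  proof (cases "j < A")
    case True
    have "(N - m + 1 \<le> j \<and> j \<le> N \<and> i = A + (m + j - N - 1)) \<longleftrightarrow> (\<not> i < A \<and> i < A + m \<and> j < A \<and> N + 1 - m \<le> j \<and> i = A + (j - (N + 1 - m)) \<and> N - m + 1 \<le> j \<and> j \<le> N)"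
      using assms True A by auto
    then show ?thesis using True unfolding Ematq.simps shapeE.simps shE_def Let_def A
      by (cases "i < A"; cases "i < A + m") auto
  next
    case False
    then show ?thesis unfolding Ematq.simps shapeE.simps shE_def Let_def A
      by (cases "i < A"; cases "i < A + m") auto
  qed
qed

lemma Ematq_shape_Ym:
  assumes "2 \<le> N" "1 \<le> m" "m \<le> N - 1"
  shows "Ematq N (Ym m) q i j = shapeE N (Ym m) (\<lambda>a b. qbinom a b q) (\<lambda>k. qint k q) i j"
proof -
  define A where "A = 2*N + m"
  have A: "2*N + m = A" "2*N < A" using assms by (auto simp: A_def)
  show ?thesis
  proof (cases "j < A")
    case True
    have "(m + 1 \<le> j \<and> j \<le> 2*N \<and> i = A + (j - m - 1)) \<longleftrightarrow> (\<not> i < A \<and> i < A + (2*N-m) \<and> j < A \<and> m + 1 \<le> j \<and> i = A + (j - (m + 1)) \<and> m + 1 \<le> j \<and> j \<le> 2*N)"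
      using assms True A by auto
    then show ?thesis using True unfolding Ematq.simps shapeE.simps shE_def Let_def A
      by (cases "i < A"; cases "i < A + (2*N-m)") auto
  next
    case False
    then show ?thesis unfolding Ematq.simps shapeE.simps shE_def Let_def A
      by (cases "i < A"; cases "i < A + (2*N-m)") auto
  qed
qed

lemma Fmatq_shape_W:
  "Fmatq N (W m) q i j = shapeF N (W m) (\<lambda>a b. qbinom a b q) (\<lambda>k. qint k q) i j"
  by (auto simp: shF_def)

lemma Fmatq_shape_Yp:
  assumes "2 \<le> N" "1 \<le> m" "m \<le> N - 1"
  shows "Fmatq N (Yp m) q i j = shapeF N (Yp m) (\<lambda>a b. qbinom a b q) (\<lambda>k. qint k q) i j"
  using assms unfolding Fmatq.simps shapeF.simps shF_def Let_def by auto

lemma Fmatq_shape_Ym: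
  assumes "2 \<le> N" "1 \<le> m" "m \<le> N - 1"
  shows "Fmatq N (Ym m) q i j = shapeF N (Ym m) (\<lambda>a b. qbinom a b q) (\<lambda>k. qint k q) i j"
  using assms unfolding Fmatq.simps shapeF.simps shF_def Let_def by auto

lemma Ematq_shape:
  assumes "2 \<le> N" "admissible N V"
  shows "Ematq N V q = shapeE N V (\<lambda>a b. qbinom a b q) (\<lambda>k. qint k q)"
  using assms by (cases V) (auto intro!: ext simp del: Ematq.simps shapeE.simps
        intro: Ematq_shape_W Ematq_shape_Yp Ematq_shape_Ym)

lemma Fmatq_shape:
  assumes "2 \<le> N" "admissible N V"
  shows "Fmatq N V q = shapeF N V (\<lambda>a b. qbinom a b q) (\<lambda>k. qint k q)"
  using assms by (cases V) (auto intro!: ext simp del: Fmatq.simps shapeF.simps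
        intro: Fmatq_shape_W Fmatq_shape_Yp Fmatq_shape_Ym)




lemma xi_nz: "xi N \<noteq> 0" by (simp add: xi_def)

lemma xi_pow: "xi N ^ k = exp (of_nat k * (pi * \<i> / of_nat N))"
  by (simp only: xi_def exp_of_nat_mult)

lemma xi_pow_N: assumes "0 < N" shows "xi N ^ N = -1"
proof -
  have "xi N ^ N = exp (pi * \<i>)" using assms by (simp add: xi_pow)
  also have "\<dots> = -1" by (simp add: exp_pi_i')
  finally show ?thesis .
qed

lemma qcurly_zero_iff: assumes "q \<noteq> 0" shows "qcurly k q = 0 \<longleftrightarrow> q ^ (2*k) = 1"
proof -
  have "qcurly k q = 0 \<longleftrightarrow> q ^ k = inverse q ^ k" by (simp add: qcurly_def)
  also have "\<dots> \<longleftrightarrow> q ^ k * q ^ k = 1" using assms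
    by (auto simp: power_inverse field_simps)
  also have "\<dots> \<longleftrightarrow> q ^ (2*k) = 1" by (simp add: power_add[symmetric] mult_2)
  finally show ?thesis .
qed

lemma xi_pow2_eq1: assumes "0 < N" shows "xi N ^ (2*k) = 1 \<longleftrightarrow> N dvd k"
proof -
  have "xi N ^ (2*k) = exp (complex_of_real (2 * real k * pi / real N) * \<i>)"
    by (simp add: xi_pow field_simps)
  also have "\<dots> = 1 \<longleftrightarrow> (\<exists>n::int. 2 * real k * pi / real N = of_int (2 * n) * pi)"
    by (subst exp_eq_1) simp
  also have "\<dots> \<longleftrightarrow> N dvd k"
  proof
    assume "\<exists>n::int. 2 * real k * pi / real N = of_int (2 * n) * pi"
    then obtain n :: int where h: "2 * real k * pi / real N = of_int (2 * n) * pi" by blast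
    then have "real k = of_int n * real N" using assms by (simp add: field_simps)
    then have "int k = n * int N" by (metis of_int_eq_iff of_int_mult of_int_of_nat_eq)
    then have "int N dvd int k" by simp
    then show "N dvd k" by simp
  next
    assume "N dvd k"
    then obtain t where "k = N * t" by blast
    then have "2 * real k * pi / real N = of_int (2 * int t) * pi" using assms by simp
    then show "\<exists>n::int. 2 * real k * pi / real N = of_int (2 * n) * pi" by blast
  qed
  finally show ?thesis .
qed

lemma qcurly_xi_zero_iff: assumes "0 < N" shows "qcurly k (xi N) = 0 \<longleftrightarrow> N dvd k"
  using qcurly_zero_iff[OF xi_nz] xi_pow2_eq1[OF assms] by simp

lemma qcurly1_xi_nz: assumes "2 \<le> N" shows "qcurly 1 (xi N) \<noteq> 0"
  using qcurly_xi_zero_iff[of N 1] assms by simp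

lemma qcurly_xi_plus: assumes "0 < N" shows "qcurly (N + k) (xi N) = - qcurly k (xi N)"
proof -
  have "inverse (xi N) ^ N = -1" using xi_pow_N[OF assms] by (simp add: power_inverse)
  then show ?thesis using xi_pow_N[OF assms] by (simp add: qcurly_def power_add)
qed

lemma qcurly_xi_minus: assumes "0 < N" "k \<le> N" shows "qcurly (N - k) (xi N) = qcurly k (xi N)"
proof -
  have "qcurly N (xi N) = qcurly (N - k + k) (xi N)" using assms by simp
  have e1: "xi N ^ (N - k) * xi N ^ k = -1" using xi_pow_N[OF assms(1)] assms by (simp add: power_add[symmetric])
  have e2: "inverse (xi N) ^ (N - k) * inverse (xi N) ^ k = -1" using e1
    by (metis inverse_minus_eq inverse_1 inverse_mult_distrib power_inverse)
  have nz: "xi N ^ k \<noteq> 0" "inverse (xi N) ^ k \<noteq> 0" by (simp_all add: xi_nz)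
  have a: "xi N ^ (N - k) = -(inverse (xi N) ^ k)"
    using e1 nz by (simp add: power_inverse field_simps eq_neg_iff_add_eq_0)
  have b: "inverse (xi N) ^ (N - k) = -(xi N ^ k)"
    using e2 nz xi_nz[of N] by (simp add: power_inverse field_simps eq_neg_iff_add_eq_0)
  show ?thesis by (simp add: qcurly_def a b)
qed

lemma qint_xi_zero: assumes "2 \<le> N" "N dvd k" shows "qint k (xi N) = 0"
  using assms qcurly_xi_zero_iff[of N k] by (simp add: qint_def)

lemma qint_xi_nz: assumes "2 \<le> N" "\<not> N dvd k" shows "qint k (xi N) \<noteq> 0"
  using assms qcurly_xi_zero_iff[of N k] qcurly1_xi_nz[OF assms(1)] by (simp add: qint_def)

lemma qint_xi_plus: assumes "2 \<le> N" shows "qint (N + k) (xi N) = - qint k (xi N)"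
  using assms qcurly_xi_plus[of N k] by (simp add: qint_def)

lemma qint_xi_minus: assumes "2 \<le> N" "k \<le> N" shows "qint (N - k) (xi N) = qint k (xi N)"
  using assms qcurly_xi_minus[of N k] by (simp add: qint_def)




lemma cfE_big:
  assumes "i < A + B" "j < A + B" "A + B \<le> n"
  shows "cfE A B s a e c n i j = 0"
  using assms unfolding cfE_def by auto

lemma cfF_big:
  assumes "i < A + B" "j < A + B" "A + B \<le> n"
  shows "cfF A B p a e c0 n i j = 0"
  using assms unfolding cfF_def by auto

lemma qdim_W: "qdim N (W m) = m + 0" by simp
lemma qdim_Yp: "m \<le> N \<Longrightarrow> qdim N (Yp m) = (2*N - m) + m" by simp
lemma qdim_Ym: "m \<le> N \<Longrightarrow> qdim N (Ym m) = (2*N + m) + (2*N - m)" by simp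

lemma mpow_shapeE_big:
  assumes "2 \<le> N" "admissible N V" "i < qdim N V" "j < qdim N V" "qdim N V \<le> n"
  shows "mpow (qdim N V) (shapeE N V qb qi) n i j = 0"
proof (cases V)
  case (W m)
  then show ?thesis using assms mpow_shE[of i m 0 j] cfE_big[of i m 0 j n] by simp
next
  case (Yp m)
  then have m: "m \<le> N" using assms by auto
  have eq: "2*N - m + m = 2*N" using m by simp
  show ?thesis using assms Yp unfolding shapeE.simps
    using mpow_shE[of i "2*N-m" m j, unfolded eq] cfE_big[of i "2*N-m" m j n, unfolded eq] by simp
next
  case (Ym m)
  then have m: "m \<le> N" using assms by auto
  have eq: "2*N + m + (2*N - m) = 4*N" using m by simp
  show ?thesis using assms Ym unfolding shapeE.simps
    using mpow_shE[of i "2*N+m" "2*N-m" j, unfolded eq] cfE_big[of i "2*N+m" "2*N-m" j n, unfolded eq] by simp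
qed

lemma mpow_shapeF_big:
  assumes "2 \<le> N" "admissible N V" "i < qdim N V" "j < qdim N V" "qdim N V \<le> n"
  shows "mpow (qdim N V) (shapeF N V qb qi) n i j = 0"
proof (cases V)
  case (W m)
  then show ?thesis using assms mpow_shF[of i m 0 j] cfF_big[of i m 0 j n] by simp
next
  case (Yp m)
  then have m: "m \<le> N" using assms by auto
  have eq: "2*N - m + m = 2*N" using m by simp
  show ?thesis using assms Yp unfolding shapeF.simps
    using mpow_shF[of i "2*N-m" m j, unfolded eq] cfF_big[of i "2*N-m" m j n, unfolded eq] by simp
next
  case (Ym m)
  then have m: "m \<le> N" using assms by auto
  have eq: "2*N + m + (2*N - m) = 4*N" using m by simp
  show ?thesis using assms Ym unfolding shapeF.simps
    using mpow_shF[of i "2*N+m" "2*N-m" j, unfolded eq] cfF_big[of i "2*N+m" "2*N-m" j n, unfolded eq] by simp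
qed

lemma prod_window_zero:
  assumes "2 \<le> N"
  shows "(\<Prod>t<N. qint (x - t) (xi N)) = 0"
proof -
  have "x mod N < N" using assms by simp
  moreover have "qint (x - x mod N) (xi N) = 0"
    using assms by (intro qint_xi_zero) (simp_all add: minus_mod_eq_mult_div)
  ultimately show ?thesis by (intro prod_zero) auto
qed

abbreviation qiX :: "nat \<Rightarrow> nat \<Rightarrow> complex" where "qiX N \<equiv> (\<lambda>k. qint k (xi N))"
abbreviation qbX :: "nat \<Rightarrow> nat \<Rightarrow> nat \<Rightarrow> complex" where "qbX N \<equiv> (\<lambda>a b. qbinom' a b (xi N))"



lemma prod_lessThan_add: "(\<Prod>t<a + b. f t) = (\<Prod>t<a. f t) * (\<Prod>t<b. f (a + t)) " for f :: "nat \<Rightarrow> complex"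
  by (induction b) (simp_all add: ac_simps)

lemma qfact_xi_nz: assumes "2 \<le> N" "c < N" shows "qint_fact c (xi N) \<noteq> 0"
proof -
  have "qint k (xi N) \<noteq> 0" if "k \<in> {1..c}" for k
    using that assms by (intro qint_xi_nz) (auto dest: dvd_imp_le)
  then show ?thesis by (simp add: qint_fact_def)
qed

lemma ccN: assumes N: "2 \<le> N" and m: "1 \<le> m" "m \<le> N - 1"
  shows "qbX N (N+m-1) N = (-1)^(m-1)"
proof -
  have "(\<Prod>y\<in>{1..m-1}. - qiX N y) = (\<Prod>x\<in>{N<..N+m-1}. qiX N x)"
    by (rule prod.reindex_bij_witness[where j = "\<lambda>y. N + y" and i = "\<lambda>x. x - N"])
       (auto simp: qint_xi_plus[OF N])
  moreover have "(\<Prod>y\<in>{1..m-1}. - qiX N y) = (-1)^(m-1) * qint_fact (m-1) (xi N)"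
    by (simp add: prod_uminus qint_fact_def)
  moreover have "N + m - 1 - N = m - 1" by simp
  ultimately show ?thesis using qfact_xi_nz[OF N, of "m-1"] m by (simp add: qbinom'_def)
qed

lemma ccNm: assumes N: "2 \<le> N" and m: "1 \<le> m" "m \<le> N - 1"
  shows "qbX N (N-1) (N-m) = 1"
proof -
  have "(\<Prod>y\<in>{1..m-1}. qiX N y) = (\<Prod>x\<in>{N-m<..N-1}. qiX N x)"
    by (rule prod.reindex_bij_witness[where j = "\<lambda>y. N - y" and i = "\<lambda>x. N - x"])
       (use m in \<open>auto simp: qint_xi_minus[OF N]\<close>)
  moreover have "N - 1 - (N - m) = m - 1" using m by simp
  ultimately show ?thesis using qfact_xi_nz[OF N, of "m-1"] m by (simp add: qbinom'_def qint_fact_def)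
qed

lemma ymE_mixed:
  assumes N: "2 \<le> N" and m: "1 \<le> m" "m \<le> N - 1" and k: "k < 2*N - m" and kj: "k + (m+1) + N = Suc j"
    and jA: "j < 2*N + m"
  shows "(\<Sum>b<N. if m+1 \<le> j - b \<and> j - b < m + 1 + (2*N - m) then
      (\<Prod>t<b. qiX N (j - t)) * (\<lambda>l. if m+1 \<le> l \<and> l \<le> 2*N then qbX N (2*N+m-1-l) (2*N-l) else 0) (j - b)
      * (\<Prod>t<N - Suc b. qiX N (j - b - (m+1) - t)) else 0) = 0"
proof -
  define cc where "cc l = (if m+1 \<le> l \<and> l \<le> 2*N then qbX N (2*N+m-1-l) (2*N-l) else 0)" for l
  define T where "T b = (if m+1 \<le> j - b \<and> j - b < m + 1 + (2*N - m) then
      (\<Prod>t<b. qiX N (j - t)) * cc (j - b) * (\<Prod>t<N - Suc b. qiX N (j - b - (m+1) - t)) else 0)" for b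
  have N0: "0 < N" using N by simp
  have QN: "qiX N N = 0" using qint_xi_zero[OF N, of N] by simp
  have Q2N: "qiX N (2*N) = 0" using qint_xi_zero[OF N, of "2*N"] by simp
  have jge: "N + m \<le> j" using kj by simp
  have zero: "T b = 0" if b: "b < N" and h: "(j - b \<noteq> N \<and> j - b \<noteq> N + m) \<or> 2*N \<le> j" for b
  proof (cases "m+1 \<le> j - b \<and> j - b < m + 1 + (2*N - m)")
    case False
    show ?thesis unfolding T_def by (simp only: if_not_P[OF False])
  next
    case g: True
    define i where "i = j - b"
    have bj: "b < j" using b jge by simp
    have ji: "j = i + b" using bj by (simp add: i_def)
    have "(\<Prod>t<b. qiX N (j - t)) = 0 \<or> cc (j - b) = 0 \<or> (\<Prod>t<N - Suc b. qiX N (j - b - (m+1) - t)) = 0"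
    proof -
      have "i < N \<or> (2*N \<le> j \<and> i < 2*N) \<or> (N < i \<and> i < N + m) \<or> (N + m < i \<and> i \<le> 2*N)"
        using h g m unfolding i_def by arith
      then consider "i < N" | "2*N \<le> j \<and> i < 2*N" | "N < i \<and> i < N + m" | "N + m < i \<and> i \<le> 2*N"
        by blast
      then show ?thesis
      proof cases
        case 1
        have "j - N < b" using 1 ji jge by arith
        moreover have "qiX N (j - (j - N)) = 0" using jge QN by simp
        ultimately have "(\<Prod>t<b. qiX N (j - t)) = 0" by (intro prod_zero) auto
        then show ?thesis by simp
      next
        case 2
        have "j - 2*N < b" using 2 ji by arith
        moreover have "qiX N (j - (j - 2*N)) = 0" using 2 Q2N by simp
        ultimately have "(\<Prod>t<b. qiX N (j - t)) = 0" by (intro prod_zero) auto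
        then show ?thesis by simp
      next
        case 3
        have "N \<in> {2*N - i<..2*N+m-1-i}" unfolding greaterThanAtMost_iff using 3 N0 by arith
        then have "(\<Prod>x\<in>{2*N - i<..2*N+m-1-i}. qiX N x) = 0"
          using QN by (intro prod_zero) auto
        then have "cc i = 0" using 3 by (simp add: cc_def qbinom'_def)
        then show ?thesis by (simp add: i_def)
      next
        case 4
        have "i - (m+1) - N < N - Suc b" using 4 ji jA by arith
        moreover have "j - b - (m+1) - (i - (m+1) - N) = N" using 4 unfolding i_def by arith
        then have "qiX N (j - b - (m+1) - (i - (m+1) - N)) = 0" using QN by simp
        ultimately have "(\<Prod>t<N - Suc b. qiX N (j - b - (m+1) - t)) = 0" by (intro prod_zero) auto
        then show ?thesis by simp
      qed
    qed
    then show ?thesis by (auto simp: T_def)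
  qed
  have "(\<Sum>b<N. T b) = 0"
  proof (cases "2*N \<le> j")
    case True
    then show ?thesis using zero by (intro sum.neutral) auto
  next
    case False
    define u where "u = j - N - m"
    have ju: "j = N + m + u" using jge by (simp add: u_def)
    have uN: "u + m < N" using False ju by simp
    define b1 where "b1 = u + m"
    define b2 where "b2 = u"
    have ne: "b1 \<noteq> b2" using m by (simp add: b1_def b2_def)
    have "(\<Sum>b<N. T b) = (\<Sum>b\<in>{b1, b2}. T b)"
    proof (rule sum.mono_neutral_right)
      show "{b1, b2} \<subseteq> {..<N}" using uN by (auto simp: b1_def b2_def)
      show "\<forall>b\<in>{..<N} - {b1, b2}. T b = 0"
      proof
        fix b assume "b \<in> {..<N} - {b1, b2}"
        then have "b < N" "b \<noteq> b1" "b \<noteq> b2" by auto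
        moreover have "j - b \<noteq> N \<and> j - b \<noteq> N + m" using calculation ju by (auto simp: b1_def b2_def)
        ultimately show "T b = 0" using zero by blast
      qed
    qed simp
    also have "\<dots> = T b1 + T b2" using ne by simp
    also have "\<dots> = 0"
    proof -
      define X where "X = (\<Prod>t<u. qiX N (j - t))"
      define Y where "Y = (\<Prod>t<N - Suc (u+m). qiX N (N - (m+1) - t))"
      define P where "P = (\<Prod>t<m. qiX N (Suc t))"
      have jb1: "j - b1 = N" using ju by (simp add: b1_def)
      have jb2: "j - b2 = N + m" using ju by (simp add: b2_def)
      have g1: "m+1 \<le> j - b1 \<and> j - b1 < m + 1 + (2*N - m)" using jb1 m by simp
      have g2: "m+1 \<le> j - b2 \<and> j - b2 < m + 1 + (2*N - m)" using jb2 m N by simp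
      have a1: "(\<Prod>t<b1. qiX N (j - t)) = X * ((-1)^m * P)"
      proof -
        have "(\<Prod>t<b1. qiX N (j - t)) = X * (\<Prod>t<m. qiX N (j - (u + t)))"
          unfolding b1_def X_def by (rule prod_lessThan_add)
        also have "(\<Prod>t<m. qiX N (j - (u + t))) = (\<Prod>t<m. - qiX N (m - t))"
        proof (rule prod.cong)
          fix t assume "t \<in> {..<m}"
          then have "j - (u + t) = N + (m - t)" using ju by simp
          then show "qiX N (j - (u + t)) = - qiX N (m - t)" using qint_xi_plus[OF N] by simp
        qed simp
        also have "\<dots> = (-1)^m * (\<Prod>t<m. qiX N (m - t))" by (simp add: prod_uminus)
        also have "(\<Prod>t<m. qiX N (m - t)) = P" unfolding P_def
          by (rule prod.reindex_bij_witness[where j = "\<lambda>t. m - 1 - t" and i = "\<lambda>t. m - 1 - t"])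
             (auto simp: Suc_diff_Suc)
        finally show ?thesis .
      qed
      have a2: "(\<Prod>t<N - Suc b1. qiX N (j - b1 - (m+1) - t)) = Y" 
      proof -
        have "j - (u + m) = N" using ju by simp
        then show ?thesis unfolding Y_def b1_def by simp
      qed
      have a3: "(\<Prod>t<b2. qiX N (j - t)) = X" by (simp add: X_def b2_def)
      have a4: "(\<Prod>t<N - Suc b2. qiX N (j - b2 - (m+1) - t)) = P * Y"
      proof -
        have e: "N - Suc b2 = m + (N - Suc (u+m))" using uN by (simp add: b2_def)
        have "(\<Prod>t<N - Suc b2. qiX N (j - b2 - (m+1) - t)) = (\<Prod>t<m. qiX N (N - 1 - t)) * (\<Prod>t<N - Suc (u+m). qiX N (N - 1 - (m + t)))"
          unfolding e jb2 by (simp add: prod_lessThan_add)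
        also have "(\<Prod>t<m. qiX N (N - 1 - t)) = P" unfolding P_def
        proof (rule prod.cong)
          fix t assume "t \<in> {..<m}"
          then have "N - 1 - t = N - Suc t" "Suc t \<le> N" using m by auto
          then show "qiX N (N - 1 - t) = qiX N (Suc t)" using qint_xi_minus[OF N, of "Suc t"] by simp
        qed simp
        also have "(\<Prod>t<N - Suc (u+m). qiX N (N - 1 - (m + t))) = Y" unfolding Y_def
          by (rule prod.cong) auto
        finally show ?thesis .
      qed
      have c1: "cc N = (-1)^(m-1)"
      proof -
        have "2*N+m-1-N = N+m-1" "2*N - N = N" by simp_all
        then show ?thesis using m ccN[OF N m] by (simp add: cc_def)
      qed
      have c2: "cc (N+m) = 1"
      proof -
        have "2*N+m-1-(N+m) = N-1" "2*N - (N+m) = N-m" by simp_all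
        moreover have "N + m \<le> 2*N" using m by simp
        ultimately show ?thesis using m ccNm[OF N m] by (simp add: cc_def)
      qed
      have "T b1 = X * ((-1)^m * P) * (-1)^(m-1) * Y"
        unfolding T_def using g1 a1 a2 c1 jb1 by simp
      moreover have "T b2 = X * 1 * (P * Y)"
        unfolding T_def using g2 a3 a4 c2 jb2 by simp
      moreover have "(-1::complex)^m = - ((-1)^(m-1))"
      proof -
        have "m = Suc (m - 1)" using m by simp
        then show ?thesis by (metis mult_minus1 power_Suc)
      qed
      ultimately show ?thesis by (simp add: algebra_simps)
    qed
    finally show ?thesis .
  qed
  then show ?thesis unfolding T_def cc_def .
qed


lemma nilE:
  assumes "2 \<le> N" "admissible N V" "i < qdim N V" "j < qdim N V"
  shows "mpow (qdim N V) (shapeE N V (qbX N) (qiX N)) N i j = 0"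
proof (cases V)
  case (W m)
  then show ?thesis using assms mpow_shE[of i m 0 j] prod_window_zero[OF assms(1), of j]
    by (simp add: cfE_def)
next
  case (Yp m)
  then have m: "1 \<le> m" "m \<le> N - 1" using assms by auto
  have eq: "2*N - m + m = 2*N" using m by simp
  have "cfE (2*N-m) m (N+1-m) (qiX N) (qiX N) (\<lambda>l. if N-m+1 \<le> l \<and> l \<le> N then qbX N (2*N-m-l-1) (N-l) else 0) N i j = 0"
  proof (cases "j < 2*N-m")
    case True
    show ?thesis
    proof (cases "i < 2*N-m")
      case True
      then show ?thesis using \<open>j < 2*N-m\<close> prod_window_zero[OF assms(1), of j] by (simp add: cfE_def)
    next
      case False
      have "i - (2*N-m) + (N+1-m) + N \<noteq> Suc j" using \<open>j < 2*N-m\<close> m by auto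
      then show ?thesis using True False by (simp add: cfE_def)
    qed
  next
    case False
    then show ?thesis using prod_window_zero[OF assms(1), of "j - (2*N-m)"] by (simp add: cfE_def)
  qed
  then show ?thesis using assms Yp mpow_shE[of i "2*N-m" m j, unfolded eq] by simp
next
  case (Ym m)
  then have m: "1 \<le> m" "m \<le> N - 1" using assms by auto
  have eq: "2*N + m + (2*N - m) = 4*N" using m by simp
  have "cfE (2*N+m) (2*N-m) (m+1) (qiX N) (qiX N) (\<lambda>l. if m+1 \<le> l \<and> l \<le> 2*N then qbX N (2*N+m-1-l) (2*N-l) else 0) N i j = 0"
  proof (cases "j < 2*N+m")
    case True
    show ?thesis
    proof (cases "i < 2*N+m")
      case True
      then show ?thesis using \<open>j < 2*N+m\<close> prod_window_zero[OF assms(1), of j] by (simp add: cfE_def)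
    next
      case False
      have k: "i - (2*N+m) < 2*N - m" using False assms Ym by simp
      show ?thesis
      proof (cases "i - (2*N+m) + (m+1) + N = Suc j")
        case c: True
        show ?thesis using True False c ymE_mixed[OF assms(1) m k c \<open>j < 2*N+m\<close>] unfolding cfE_def by simp
      next
        case c: False
        then show ?thesis using True False by (simp add: cfE_def)
      qed
    qed
  next
    case False
    then show ?thesis using prod_window_zero[OF assms(1), of "j - (2*N+m)"] by (simp add: cfE_def)
  qed
  then show ?thesis using assms Ym mpow_shE[of i "2*N+m" "2*N-m" j, unfolded eq] by simp
qed


lemma nilF:
  assumes "2 \<le> N" "admissible N V" "i < qdim N V" "j < qdim N V"
  shows "mpow (qdim N V) (shapeF N V (qbX N) (qiX N)) N i j = 0"
proof (cases V)
  case (W m)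
  have "(\<Prod>t<N. qiX N (m - 1 - (j + t))) = 0"
    using prod_window_zero[OF assms(1), of "m - 1 - j"] by (simp add: diff_diff_add)
  have "cfF m 0 0 (\<lambda>l. qiX N (m-1-l)) (\<lambda>k. 0) 0 N i j = 0"
    using W assms \<open>(\<Prod>t<N. qiX N (m - 1 - (j + t))) = 0\<close> by (simp add: cfF_def)
  then show ?thesis using W assms mpow_shF[of i m 0 j] by simp
next
  case (Yp m)
  then have m: "1 \<le> m" "m \<le> N - 1" using assms by auto
  have eq: "2*N - m + m = 2*N" using m by simp
  have a: "(\<Prod>t<N. qiX N (2*N - m - (j + t) - 1)) = 0"
    using prod_window_zero[OF assms(1), of "2*N - m - 1 - j"] by (simp add: diff_diff_add ac_simps)
  have b: "(\<Prod>t<N. qiX N (m - (j - (2*N-m) + t) - 1)) = 0"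
    using prod_window_zero[OF assms(1), of "m - 1 - (j - (2*N-m))"] by (simp add: diff_diff_add ac_simps)
  have "cfF (2*N-m) m (N-m-1) (\<lambda>l. qiX N (2*N-m-l-1)) (\<lambda>k. qiX N (m-k-1)) (qbX N (N-1) (m-1)) N i j = 0"
  proof (cases "j < 2*N-m")
    case True
    show ?thesis
    proof (cases "i < 2*N-m")
      case True
      then show ?thesis using \<open>j < 2*N-m\<close> a by (simp add: cfF_def)
    next
      case False
      have "i - (2*N-m) < m" using False assms Yp by auto
      then have cond: "\<not> (j \<le> N-m-1 \<and> N-m-1 < 2*N-m \<and> 0 < m \<and> N = (N-m-1 - j) + Suc (i - (2*N-m)))" using m by auto
      show ?thesis unfolding cfF_def if_P[OF True] if_not_P[OF False] if_not_P[OF cond] ..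
    qed
  next
    case False
    then show ?thesis using b by (simp add: cfF_def)
  qed
  then show ?thesis using assms Yp mpow_shF[of i "2*N-m" m j, unfolded eq] by simp
next
  case (Ym m)
  then have m: "1 \<le> m" "m \<le> N - 1" using assms by auto
  have eq: "2*N + m + (2*N - m) = 4*N" using m by simp
  have a: "(\<Prod>t<N. qiX N (2*N + m - 1 - (j + t))) = 0"
    using prod_window_zero[OF assms(1), of "2*N + m - 1 - j"] by (simp add: diff_diff_add ac_simps)
  have b: "(\<Prod>t<N. qiX N (2*N - m - 1 - (j - (2*N+m) + t))) = 0"
    using prod_window_zero[OF assms(1), of "2*N - m - 1 - (j - (2*N+m))"] by (simp add: diff_diff_add ac_simps)
  have c: "(\<Prod>t<i - (2*N+m). qiX N (2*N - m - 1 - t)) = 0"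
    if "N = m - 1 - j + Suc (i - (2*N+m))" "j \<le> m - 1" for j
  proof -
    have "N - m - 1 < i - (2*N+m)" using that m by auto
    moreover have "qiX N (2*N - m - 1 - (N - m - 1)) = 0"
    proof -
      have "2*N - m - 1 - (N - m - 1) = N" using m by auto
      then show ?thesis using qint_xi_zero[OF assms(1), of N] by simp
    qed
    ultimately show ?thesis by (intro prod_zero) auto
  qed
  have "cfF (2*N+m) (2*N-m) (m-1) (\<lambda>l. qiX N (2*N+m-1-l)) (\<lambda>k. qiX N (2*N-m-1-k)) (qbX N (2*N-1) (2*N-m-1)) N i j = 0"
  proof (cases "j < 2*N+m")
    case True
    show ?thesis
    proof (cases "i < 2*N+m")
      case True
      then show ?thesis using \<open>j < 2*N+m\<close> a by (simp add: cfF_def)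
    next
      case False
      show ?thesis
      proof (cases "j \<le> m-1 \<and> m-1 < 2*N+m \<and> 0 < 2*N-m \<and> N = (m-1 - j) + Suc (i - (2*N+m))")
        case cc: True
        then have "(\<Prod>t<i - (2*N+m). qiX N (2*N - m - 1 - t)) = 0" using c by blast
        then show ?thesis unfolding cfF_def if_P[OF True] if_not_P[OF False] if_P[OF cc] by simp
      next
        case cc: False
        show ?thesis unfolding cfF_def if_P[OF True] if_not_P[OF False] if_not_P[OF cc] ..
      qed
    qed
  next
    case False
    then show ?thesis using b by (simp add: cfF_def)
  qed
  then show ?thesis using assms Ym mpow_shF[of i "2*N+m" "2*N-m" j, unfolded eq] by simp
qed




definition UU :: "nat \<Rightarrow> complex set" where
  "UU N = {q. q \<noteq> 0} \<inter> (\<Inter>k\<in>{1..<N}. {q. q ^ (2*k) \<noteq> 1})"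

lemma open_UU: "open (UU N)"
  unfolding UU_def
  by (intro open_Int open_INT finite_atLeastLessThan ballI open_Collect_neq continuous_intros)

lemma xi_in_UU: assumes "0 < N" shows "xi N \<in> UU N"
  using assms xi_nz[of N] xi_pow2_eq1[OF assms] by (auto simp: UU_def dest: dvd_imp_le)

lemma UU_nz: "q \<in> UU N \<Longrightarrow> q \<noteq> 0" by (simp add: UU_def)

lemma UU_qcurly_nz: assumes "q \<in> UU N" "1 \<le> k" "k < N" shows "qcurly k q \<noteq> 0"
  using assms qcurly_zero_iff[OF UU_nz[OF assms(1)], of k] by (auto simp: UU_def)

lemma hol_qcurly: "(\<lambda>q. qcurly k q) holomorphic_on UU N"
  unfolding qcurly_def by (intro holomorphic_intros) (auto simp: UU_def)

lemma hol_qint: assumes "2 \<le> N" shows "(\<lambda>q. qint k q) holomorphic_on UU N"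
  unfolding qint_def using assms by (intro holomorphic_intros hol_qcurly UU_qcurly_nz) auto

lemma UU_qint_nz: assumes "2 \<le> N" "q \<in> UU N" "1 \<le> k" "k < N" shows "qint k q \<noteq> 0"
  using assms UU_qcurly_nz[of q N k] UU_qcurly_nz[of q N 1] by (simp add: qint_def)

lemma UU_qint_fact_nz: assumes "2 \<le> N" "q \<in> UU N" "c < N" shows "qint_fact c q \<noteq> 0"
  using assms UU_qint_nz[OF assms(1,2)] by (auto simp: qint_fact_def)

lemma hol_qint_fact: assumes "2 \<le> N" shows "(\<lambda>q. qint_fact c q) holomorphic_on UU N"
  unfolding qint_fact_def using assms by (intro holomorphic_intros hol_qint)

lemma hol_qbinom': assumes "2 \<le> N" "a - b < N" shows "(\<lambda>q. qbinom' a b q) holomorphic_on UU N"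
  unfolding qbinom'_def using assms
  by (intro holomorphic_intros hol_qint hol_qint_fact UU_qint_fact_nz) auto

lemma hol_if: "f holomorphic_on S \<Longrightarrow> g holomorphic_on S \<Longrightarrow> (\<lambda>q. if P then f q else g q) holomorphic_on S"
  by (cases P) auto

lemma hol_shE:
  assumes "\<And>l. (\<lambda>q. a l q) holomorphic_on S" "\<And>l. (\<lambda>q. e l q) holomorphic_on S" "\<And>l. (\<lambda>q. c l q) holomorphic_on S"
  shows "(\<lambda>q. shE A B s (\<lambda>l. a l q) (\<lambda>l. e l q) (\<lambda>l. c l q) i j) holomorphic_on S"
  unfolding shE_def by (intro hol_if holomorphic_intros assms)

lemma hol_shF:
  assumes "\<And>l. (\<lambda>q. a l q) holomorphic_on S" "\<And>l. (\<lambda>q. e l q) holomorphic_on S" "(\<lambda>q. c q) holomorphic_on S"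
  shows "(\<lambda>q. shF A B p (\<lambda>l. a l q) (\<lambda>l. e l q) (c q) i j) holomorphic_on S"
  unfolding shF_def by (intro hol_if holomorphic_intros assms)

definition Eh :: "nat \<Rightarrow> qmod \<Rightarrow> complex \<Rightarrow> nat \<Rightarrow> nat \<Rightarrow> complex" where
  "Eh N V q = shapeE N V (\<lambda>a b. qbinom' a b q) (\<lambda>k. qint k q)"
definition Fh :: "nat \<Rightarrow> qmod \<Rightarrow> complex \<Rightarrow> nat \<Rightarrow> nat \<Rightarrow> complex" where
  "Fh N V q = shapeF N V (\<lambda>a b. qbinom' a b q) (\<lambda>k. qint k q)"

lemma hol_Eh:
  assumes "2 \<le> N" "admissible N V"
  shows "(\<lambda>q. Eh N V q i j) holomorphic_on UU N"
proof (cases V)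
  case (W m)
  then show ?thesis unfolding Eh_def shapeE.simps
    using hol_shE[of "\<lambda>l q. qint l q" "UU N" "\<lambda>l q. 0" "\<lambda>l q. 0"] hol_qint[OF assms(1)] by simp
next
  case (Yp m)
  have "(\<lambda>q. if N-m+1 \<le> l \<and> l \<le> N then qbinom' (2*N-m-l-1) (N-l) q else 0) holomorphic_on UU N" for l
    using assms Yp by (intro hol_if hol_qbinom') auto
  then show ?thesis unfolding Eh_def shapeE.simps Yp
    using hol_shE[of "\<lambda>l q. qint l q" "UU N" "\<lambda>l q. qint l q" "\<lambda>l q. if N-m+1 \<le> l \<and> l \<le> N then qbinom' (2*N-m-l-1) (N-l) q else 0"]
      hol_qint[OF assms(1)] by simp
next
  case (Ym m)
  have "(\<lambda>q. if m+1 \<le> l \<and> l \<le> 2*N then qbinom' (2*N+m-1-l) (2*N-l) q else 0) holomorphic_on UU N" for l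
    using assms Ym by (intro hol_if hol_qbinom') auto
  then show ?thesis unfolding Eh_def shapeE.simps Ym
    using hol_shE[of "\<lambda>l q. qint l q" "UU N" "\<lambda>l q. qint l q" "\<lambda>l q. if m+1 \<le> l \<and> l \<le> 2*N then qbinom' (2*N+m-1-l) (2*N-l) q else 0"]
      hol_qint[OF assms(1)] by simp
qed

lemma hol_Fh:
  assumes "2 \<le> N" "admissible N V"
  shows "(\<lambda>q. Fh N V q i j) holomorphic_on UU N"
proof (cases V)
  case (W m)
  then show ?thesis unfolding Fh_def shapeF.simps
    using hol_shF[of "\<lambda>l q. qint (m-1-l) q" "UU N" "\<lambda>l q. 0" "\<lambda>q. 0"] hol_qint[OF assms(1)] by simp
next
  case (Yp m)
  have "(\<lambda>q. qbinom' (N-1) (m-1) q) holomorphic_on UU N"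
    using assms Yp by (intro hol_qbinom') auto
  then show ?thesis unfolding Fh_def shapeF.simps Yp
    using hol_shF[of "\<lambda>l q. qint (2*N-m-l-1) q" "UU N" "\<lambda>l q. qint (m-l-1) q" "\<lambda>q. qbinom' (N-1) (m-1) q"]
      hol_qint[OF assms(1)] by simp
next
  case (Ym m)
  have "(\<lambda>q. qbinom' (2*N-1) (2*N-m-1) q) holomorphic_on UU N"
    using assms Ym by (intro hol_qbinom') auto
  then show ?thesis unfolding Fh_def shapeF.simps Ym
    using hol_shF[of "\<lambda>l q. qint (2*N+m-1-l) q" "UU N" "\<lambda>l q. qint (2*N-m-1-l) q" "\<lambda>q. qbinom' (2*N-1) (2*N-m-1) q"]
      hol_qint[OF assms(1)] by simp
qed

lemma hol_mpow:
  assumes "\<And>i j. (\<lambda>q. M q i j) holomorphic_on S"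
  shows "(\<lambda>q. mpow d (M q) n i j) holomorphic_on S"
proof (induction n arbitrary: i j)
  case 0
  then show ?case by simp
next
  case (Suc n)
  then show ?case by (simp, intro holomorphic_intros assms Suc)
qed




lemma qint_fact_split:
  assumes "b \<le> a" shows "qint_fact a q = qint_fact b q * (\<Prod>k\<in>{b<..a}. qint k q)"
proof -
  have "{1..a} = {1..b} \<union> {b<..a}" using assms by auto
  moreover have "{1..b} \<inter> {b<..a} = {}" by auto
  ultimately show ?thesis unfolding qint_fact_def by (simp add: prod.union_disjoint)
qed

lemma qbinom_eq':
  assumes "b \<le> a" "qint_fact b q \<noteq> 0" shows "qbinom a b q = qbinom' a b q"
  unfolding qbinom_def qbinom'_def qint_fact_split[OF assms(1), of q] using assms(2) by simp

definition good :: "nat \<Rightarrow> complex \<Rightarrow> bool" where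
  "good N q \<longleftrightarrow> q \<noteq> 0 \<and> (\<forall>k\<in>{1..2*N}. q ^ (2*k) \<noteq> 1)"

lemma eventually_good: assumes "0 < N" shows "eventually (\<lambda>q. good N q) (at (xi N))"
proof -
  have e0: "eventually (\<lambda>q. q \<in> {q. q \<noteq> 0}) (at (xi N))"
    by (rule eventually_at_in_open') (auto simp: xi_nz open_Collect_neq)
  have "\<forall>k\<in>{1..2*N}. eventually (\<lambda>q. q ^ (2*k) \<noteq> 1) (at (xi N))"
  proof
    fix k assume "k \<in> {1..2*N}"
    then have "finite {z::complex. z ^ (2*k) = 1}" by (intro finite_roots_unity) auto
    then have "\<not> xi N islimpt {z::complex. z ^ (2*k) = 1}" by (rule islimpt_finite)
    then show "eventually (\<lambda>q. q ^ (2*k) \<noteq> 1) (at (xi N))"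
      unfolding islimpt_iff_eventually by simp
  qed
  then have "eventually (\<lambda>q. \<forall>k\<in>{1..2*N}. q ^ (2*k) \<noteq> 1) (at (xi N))"
    by (intro eventually_ball_finite) auto
  with e0 show ?thesis unfolding good_def by eventually_elim auto
qed

lemma good_qint_fact_nz: assumes "good N q" "b \<le> 2*N" shows "qint_fact b q \<noteq> 0"
proof -
  have "qint k q \<noteq> 0" if "1 \<le> k" "k \<le> b" for k
  proof -
    have g: "q \<noteq> 0" "\<forall>k\<in>{1..2*N}. q ^ (2*k) \<noteq> 1" using assms(1) unfolding good_def by auto
    have "q ^ (2*k) \<noteq> 1" using g(2) that assms(2) by auto
    moreover have "q ^ (2*1) \<noteq> 1" using bspec[OF g(2), of 1] that assms(2) by (simp del: power_one_right)
    ultimately have "qcurly k q \<noteq> 0" "qcurly 1 q \<noteq> 0"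
      using qcurly_zero_iff[OF g(1), of k] qcurly_zero_iff[OF g(1), of 1] by auto
    then show ?thesis by (simp add: qint_def)
  qed
  then show ?thesis by (auto simp: qint_fact_def)
qed

lemma Ematq_Eh:
  assumes "2 \<le> N" "admissible N V" "good N q"
  shows "Ematq N V q = Eh N V q"
  unfolding Ematq_shape[OF assms(1,2)] Eh_def
proof (cases V)
  case (Yp m)
  have "(\<lambda>l. if N-m+1 \<le> l \<and> l \<le> N then qbinom (2*N-m-l-1) (N-l) q else 0)
      = (\<lambda>l. if N-m+1 \<le> l \<and> l \<le> N then qbinom' (2*N-m-l-1) (N-l) q else 0)"
    using assms Yp good_qint_fact_nz[OF assms(3)] by (intro ext) (auto intro!: qbinom_eq')
  then show "shapeE N V (\<lambda>a b. qbinom a b q) (\<lambda>k. qint k q) = shapeE N V (\<lambda>a b. qbinom' a b q) (\<lambda>k. qint k q)"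
    using Yp by simp
next
  case (Ym m)
  have "(\<lambda>l. if m+1 \<le> l \<and> l \<le> 2*N then qbinom (2*N+m-1-l) (2*N-l) q else 0)
      = (\<lambda>l. if m+1 \<le> l \<and> l \<le> 2*N then qbinom' (2*N+m-1-l) (2*N-l) q else 0)"
    using assms Ym good_qint_fact_nz[OF assms(3)] by (intro ext) (auto intro!: qbinom_eq')
  then show "shapeE N V (\<lambda>a b. qbinom a b q) (\<lambda>k. qint k q) = shapeE N V (\<lambda>a b. qbinom' a b q) (\<lambda>k. qint k q)"
    using Ym by simp
qed simp

lemma Fmatq_Fh:
  assumes "2 \<le> N" "admissible N V" "good N q"
  shows "Fmatq N V q = Fh N V q"
  unfolding Fmatq_shape[OF assms(1,2)] Fh_def
proof (cases V)
  case (Yp m)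
  have "qbinom (N-1) (m-1) q = qbinom' (N-1) (m-1) q"
    using assms Yp good_qint_fact_nz[OF assms(3)] by (intro qbinom_eq') auto
  then show "shapeF N V (\<lambda>a b. qbinom a b q) (\<lambda>k. qint k q) = shapeF N V (\<lambda>a b. qbinom' a b q) (\<lambda>k. qint k q)"
    using Yp by simp
next
  case (Ym m)
  have "qbinom (2*N-1) (2*N-m-1) q = qbinom' (2*N-1) (2*N-m-1) q"
    using assms Ym good_qint_fact_nz[OF assms(3)] by (intro qbinom_eq') auto
  then show "shapeF N V (\<lambda>a b. qbinom a b q) (\<lambda>k. qint k q) = shapeF N V (\<lambda>a b. qbinom' a b q) (\<lambda>k. qint k q)"
    using Ym by simp
qed simp

lemma hol_isCont:
  assumes "f holomorphic_on UU N" "0 < N"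
  shows "(f \<longlongrightarrow> f (xi N)) (at (xi N))"
proof -
  have "continuous_on (UU N) f" using assms holomorphic_on_imp_continuous_on by blast
  then have "isCont f (xi N)" using open_UU xi_in_UU[OF assms(2)] continuous_on_eq_continuous_at by blast
  then show ?thesis by (simp add: isCont_def)
qed

lemma Emat_spec_Eh:
  assumes "2 \<le> N" "admissible N V"
  shows "Emat_spec N V = Eh N V (xi N)"
proof (intro ext)
  fix i j
  have t: "((\<lambda>q. Eh N V q i j) \<longlongrightarrow> Eh N V (xi N) i j) (at (xi N))"
    using hol_isCont[OF hol_Eh[OF assms]] assms by simp
  have "((\<lambda>q. Ematq N V q i j) \<longlongrightarrow> Eh N V (xi N) i j) (at (xi N))"
    by (rule Lim_transform_eventually[OF t]) (use eventually_good[of N] assms Ematq_Eh[OF assms] in \<open>auto elim: eventually_mono\<close>)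
  then show "Emat_spec N V i j = Eh N V (xi N) i j"
    unfolding Emat_spec_def by (intro tendsto_Lim) auto
qed

lemma Fmat_spec_Fh:
  assumes "2 \<le> N" "admissible N V"
  shows "Fmat_spec N V = Fh N V (xi N)"
proof (intro ext)
  fix i j
  have t: "((\<lambda>q. Fh N V q i j) \<longlongrightarrow> Fh N V (xi N) i j) (at (xi N))"
    using hol_isCont[OF hol_Fh[OF assms]] assms by simp
  have "((\<lambda>q. Fmatq N V q i j) \<longlongrightarrow> Fh N V (xi N) i j) (at (xi N))"
    by (rule Lim_transform_eventually[OF t]) (use eventually_good[of N] assms Fmatq_Fh[OF assms] in \<open>auto elim: eventually_mono\<close>)
  then show "Fmat_spec N V i j = Fh N V (xi N) i j"
    unfolding Fmat_spec_def by (intro tendsto_Lim) auto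
qed




lemma mpow_add:
  assumes "i < d"
  shows "mpow d M (a + b) i j = (\<Sum>l<d. mpow d M a i l * mpow d M b l j)"
  using assms
proof (induction a arbitrary: i)
  case 0
  have "(\<Sum>l<d. mpow d M 0 i l * mpow d M b l j) = (\<Sum>l<d. (if l = i then 1 else 0) * mpow d M b l j)"
    by (rule sum.cong) auto
  then show ?case using 0 by (simp add: sum_delta_mult)
next
  case (Suc a)
  have "mpow d M (Suc a + b) i j = (\<Sum>k<d. M i k * (\<Sum>l<d. mpow d M a k l * mpow d M b l j))"
    using Suc.IH by simp
  also have "\<dots> = (\<Sum>k<d. \<Sum>l<d. M i k * mpow d M a k l * mpow d M b l j)"
    by (simp only: sum_distrib_left mult.assoc)
  also have "\<dots> = (\<Sum>l<d. \<Sum>k<d. M i k * mpow d M a k l * mpow d M b l j)"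
    by (rule sum.swap)
  also have "\<dots> = (\<Sum>l<d. (\<Sum>k<d. M i k * mpow d M a k l) * mpow d M b l j)"
    by (simp only: sum_distrib_right)
  finally show ?case by simp
qed


lemma mpow_fac:
  assumes hol: "\<And>i j. (\<lambda>q. X q i j) holomorphic_on UU N"
    and nil: "\<And>i j. i < d \<Longrightarrow> j < d \<Longrightarrow> mpow d (X (xi N)) N i j = 0"
    and N: "0 < N"
  shows "\<exists>H. \<forall>i<d. \<forall>j<d. (\<lambda>q. H i j q) holomorphic_on UU N \<and>
            (\<forall>q\<in>UU N. mpow d (X q) n i j = (q - xi N) ^ (n div N) * H i j q)"
proof -
  define f where "f i j = (\<lambda>q. mpow d (X q) N i j)" for i j
  define G where "G i j = (\<lambda>z. if z = xi N then deriv (f i j) (xi N) else (f i j z - f i j (xi N)) / (z - xi N))" for i j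
  have Ghol: "(\<lambda>q. G i j q) holomorphic_on UU N" for i j
    unfolding G_def by (rule pole_lemma_open) (auto simp: f_def open_UU intro: hol_mpow hol)
  have Geq: "mpow d (X q) N i j = (q - xi N) * G i j q" if "i < d" "j < d" for i j q
  proof (cases "q = xi N")
    case True
    then show ?thesis using nil that by simp
  next
    case False
    have "f i j (xi N) = 0" using nil that by (simp add: f_def)
    then show ?thesis using False by (simp add: G_def f_def)
  qed
  have step: "\<exists>H. \<forall>i<d. \<forall>j<d. (\<lambda>q. H i j q) holomorphic_on UU N \<and>
            (\<forall>q\<in>UU N. mpow d (X q) (t * N + r) i j = (q - xi N) ^ t * H i j q)" for t r
  proof (induction t)
    case 0
    show ?case by (rule exI[of _ "\<lambda>i j q. mpow d (X q) r i j"]) (auto intro: hol_mpow hol)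
  next
    case (Suc t)
    then obtain H where H: "\<forall>i<d. \<forall>j<d. (\<lambda>q. H i j q) holomorphic_on UU N \<and>
            (\<forall>q\<in>UU N. mpow d (X q) (t * N + r) i j = (q - xi N) ^ t * H i j q)" by blast
    show ?case
    proof (rule exI[of _ "\<lambda>i j q. \<Sum>l<d. G i l q * H l j q"], intro allI impI conjI ballI)
      fix i j assume ij: "i < d" "j < d"
      show "(\<lambda>q. \<Sum>l<d. G i l q * H l j q) holomorphic_on UU N"
        using H ij by (intro holomorphic_intros Ghol) auto
      fix q assume q: "q \<in> UU N"
      have "mpow d (X q) (Suc t * N + r) i j = mpow d (X q) (N + (t * N + r)) i j" by (simp add: add.assoc)
      also have "\<dots> = (\<Sum>l<d. mpow d (X q) N i l * mpow d (X q) (t * N + r) l j)"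
        by (rule mpow_add) (use ij in auto)
      also have "\<dots> = (\<Sum>l<d. ((q - xi N) * G i l q) * ((q - xi N) ^ t * H l j q))"
        by (rule sum.cong) (use ij q H Geq in auto)
      also have "\<dots> = (q - xi N) ^ Suc t * (\<Sum>l<d. G i l q * H l j q)"
        by (simp add: sum_distrib_left ac_simps)
      finally show "mpow d (X q) (Suc t * N + r) i j = (q - xi N) ^ Suc t * (\<Sum>l<d. G i l q * H l j q)" .
    qed
  qed
  have "n = (n div N) * N + n mod N" by simp
  then show ?thesis using step[of "n div N" "n mod N"] by metis
qed

lemma div_Suc_dvd: assumes "0 < (N::nat)" "N dvd Suc n" shows "Suc n div N = Suc (n div N)"
proof -
  obtain t where t: "Suc n = N * t" using assms by blast
  then obtain s where s: "t = Suc s" by (cases t) auto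
  have n: "n = N * s + (N - 1)" using t s assms by (simp add: algebra_simps)
  have "n div N = s"
    by (rule div_nat_eqI) (use n assms in \<open>simp_all add: algebra_simps\<close>)
  then show ?thesis using t s assms by simp
qed

lemma qcurly_factor:
  assumes "0 < N" "1 \<le> k"
  shows "\<exists>v. isCont v (xi N) \<and> v (xi N) \<noteq> 0 \<and>
     (\<forall>q. q \<noteq> 0 \<longrightarrow> qcurly k q = (q - xi N) ^ (if N dvd k then 1 else 0) * v q)"
proof (cases "N dvd k")
  case False
  show ?thesis
  proof (rule exI[of _ "qcurly k"], intro conjI)
    show "isCont (qcurly k) (xi N)" unfolding qcurly_def[abs_def] using xi_nz[of N]
      by (intro continuous_intros) auto
    show "qcurly k (xi N) \<noteq> 0" using qcurly_xi_zero_iff[OF assms(1)] False by simp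
  qed (use False in simp)
next
  case True
  define v where "v q = inverse q ^ k * (\<Sum>i<2*k. xi N ^ (2*k - Suc i) * q ^ i)" for q
  have x2: "xi N ^ (2*k) = 1" using xi_pow2_eq1[OF assms(1)] True by simp
  show ?thesis
  proof (rule exI[of _ v], intro conjI allI impI)
    show "isCont v (xi N)" unfolding v_def using xi_nz[of N] by (intro continuous_intros) auto
    have "(\<Sum>i<2*k. xi N ^ (2*k - Suc i) * xi N ^ i) = (\<Sum>i<2*k. xi N ^ (2*k - 1))"
      by (rule sum.cong) (auto simp: power_add[symmetric])
    then have "v (xi N) = inverse (xi N) ^ k * (of_nat (2*k) * xi N ^ (2*k - 1))"
      by (simp add: v_def)
    then show "v (xi N) \<noteq> 0" using xi_nz[of N] assms by simp
    fix q :: complex assume q: "q \<noteq> 0"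
    have "q ^ (2*k) - 1 = (q - xi N) * (\<Sum>i<2*k. xi N ^ (2*k - Suc i) * q ^ i)"
      using power_diff_sumr2[of q "2*k" "xi N"] x2 by simp
    moreover have "qcurly k q = inverse q ^ k * (q ^ (2*k) - 1)"
      using q by (simp add: qcurly_def power_inverse field_simps power_mult power2_eq_square)
    ultimately show "qcurly k q = (q - xi N) ^ (if N dvd k then 1 else 0) * v q"
      using True by (simp add: v_def)
  qed
qed

lemma qcurly_fact_factor:
  assumes "0 < N"
  shows "\<exists>p u. p \<le> n div N \<and> isCont u (xi N) \<and> u (xi N) \<noteq> 0 \<and>
     (\<forall>q. q \<noteq> 0 \<longrightarrow> qcurly_fact n q = (q - xi N) ^ p * u q)"
proof (induction n)
  case 0
  show ?case by (rule exI[of _ 0], rule exI[of _ "\<lambda>q. 1"]) (auto simp: qcurly_fact_def)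
next
  case (Suc n)
  obtain p u where pu: "p \<le> n div N" "isCont u (xi N)" "u (xi N) \<noteq> 0"
     "\<forall>q. q \<noteq> 0 \<longrightarrow> qcurly_fact n q = (q - xi N) ^ p * u q" using Suc.IH by blast
  obtain v where v: "isCont v (xi N)" "v (xi N) \<noteq> 0"
     "\<forall>q. q \<noteq> 0 \<longrightarrow> qcurly (Suc n) q = (q - xi N) ^ (if N dvd Suc n then 1 else 0) * v q"
    using qcurly_factor[OF assms, of "Suc n"] by auto
  have split: "qcurly_fact (Suc n) q = qcurly_fact n q * qcurly (Suc n) q" for q
    by (simp add: qcurly_fact_def)
  show ?case
  proof (rule exI[of _ "p + (if N dvd Suc n then 1 else 0)"], rule exI[of _ "\<lambda>q. u q * v q"], intro conjI allI impI)
    show "p + (if N dvd Suc n then 1 else 0) \<le> Suc n div N"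
    proof -
      have "n div N \<le> Suc n div N" by (rule div_le_mono) simp
      then have "p \<le> Suc n div N" using pu(1) by (rule le_trans[rotated])
      then show ?thesis using pu(1) div_Suc_dvd[OF assms, of n] by (cases "N dvd Suc n") auto
    qed
    show "isCont (\<lambda>q. u q * v q) (xi N)" using pu v by (intro continuous_intros)
    show "u (xi N) * v (xi N) \<noteq> 0" using pu v by simp
    fix q :: complex assume "q \<noteq> 0"
    then show "qcurly_fact (Suc n) q = (q - xi N) ^ (p + (if N dvd Suc n then 1 else 0)) * (u q * v q)"
      unfolding split using pu v by (simp add: power_add ac_simps)
  qed
qed




lemma xi_half_sq: "xi_half N ^ 2 = xi N"
proof -
  have "xi_half N ^ 2 = exp (of_nat 2 * (pi * \<i> / of_nat (2 * N)))"
    unfolding xi_half_def by (simp only: exp_of_nat_mult)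
  also have "\<dots> = xi N" unfolding xi_def by (cases "N = 0") (simp_all add: field_simps)
  finally show ?thesis .
qed

lemma xi_half_nz: "xi_half N \<noteq> 0" by (simp add: xi_half_def)

lemma filterlim_sq: "filterlim (\<lambda>s. s ^ 2) (at (xi N)) (at (xi_half N))"
proof -
  have t: "((\<lambda>s::complex. s ^ 2) \<longlongrightarrow> xi N) (at (xi_half N))"
  proof -
    have "((\<lambda>s::complex. s ^ 2) \<longlongrightarrow> xi_half N ^ 2) (at (xi_half N))" by (intro tendsto_intros)
    then show ?thesis by (simp only: xi_half_sq)
  qed
  have e1: "eventually (\<lambda>s. s \<in> {s. s \<noteq> - xi_half N}) (at (xi_half N))"
    by (rule eventually_at_in_open') (auto simp: open_Collect_neq xi_half_nz)
  have e2: "eventually (\<lambda>s. s \<noteq> xi_half N) (at (xi_half N))"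
    by (simp add: eventually_at_filter)
  have "eventually (\<lambda>s. s ^ 2 \<noteq> xi N) (at (xi_half N))"
    using e1 e2
  proof eventually_elim
    case (elim s)
    have "s ^ 2 - xi_half N ^ 2 = (s - xi_half N) * (s + xi_half N)" by (simp add: power2_eq_square algebra_simps)
    moreover have "s + xi_half N \<noteq> 0" using elim by (auto simp: add_eq_0_iff)
    ultimately show ?case using elim xi_half_sq[of N] by auto
  qed
  then show ?thesis using t by (simp add: filterlim_at)
qed

lemma hol_qcurly_fact: "(\<lambda>q. qcurly_fact n q) holomorphic_on UU N"
  unfolding qcurly_fact_def by (intro holomorphic_intros hol_qcurly)

lemma hol_Rcoef: assumes "n < N" shows "(\<lambda>q. Rcoef n q) holomorphic_on UU N"
proof -
  have "qcurly_fact n q \<noteq> 0" if "q \<in> UU N" for q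
    using UU_qcurly_nz[OF that] assms by (auto simp: qcurly_fact_def)
  then show ?thesis unfolding Rcoef_def
    by (intro holomorphic_intros hol_qcurly hol_qcurly_fact) (auto simp: UU_def)
qed

lemma term_lim:
  assumes N: "2 \<le> N" and adm: "admissible N V1" "admissible N V2"
    and ij: "i1 < qdim N V1" "j1 < qdim N V1" "i2 < qdim N V2" "j2 < qdim N V2"
  shows "((\<lambda>q. Rcoef n q * mpow (qdim N V1) (Ematq N V1 q) n i1 j1 * mpow (qdim N V2) (Fmatq N V2 q) n i2 j2)
     \<longlongrightarrow> (if n < N then Rcoef n (xi N) * mpow (qdim N V1) (Eh N V1 (xi N)) n i1 j1 * mpow (qdim N V2) (Fh N V2 (xi N)) n i2 j2 else 0))
     (at (xi N))"
proof -
  define d1 where "d1 = qdim N V1"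
  define d2 where "d2 = qdim N V2"
  define Th where "Th q = Rcoef n q * mpow d1 (Eh N V1 q) n i1 j1 * mpow d2 (Fh N V2 q) n i2 j2" for q
  have N0: "0 < N" using N by simp
  have ev: "eventually (\<lambda>q. Th q = Rcoef n q * mpow d1 (Ematq N V1 q) n i1 j1 * mpow d2 (Fmatq N V2 q) n i2 j2) (at (xi N))"
    using eventually_good[OF N0] by eventually_elim (simp add: Th_def Ematq_Eh[OF N adm(1)] Fmatq_Fh[OF N adm(2)])
  have hE: "(\<lambda>q. mpow d1 (Eh N V1 q) n i1 j1) holomorphic_on UU N"
    by (intro hol_mpow hol_Eh N adm)
  have hF: "(\<lambda>q. mpow d2 (Fh N V2 q) n i2 j2) holomorphic_on UU N"
    by (intro hol_mpow hol_Fh N adm)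
  have "(Th \<longlongrightarrow> (if n < N then Th (xi N) else 0)) (at (xi N))"
  proof (cases "n < N")
    case True
    have "Th holomorphic_on UU N" unfolding Th_def[abs_def]
      by (intro holomorphic_intros hol_Rcoef True hE hF)
    then show ?thesis using hol_isCont[OF _ N0] True by simp
  next
    case False
    define f where "f = n div N"
    have f1: "1 \<le> f"
    proof -
      have "0 < n div N" using False N0 div_greater_zero_iff[of n N] by simp
      then show ?thesis by (simp add: f_def)
    qed
    obtain H1 where H1: "\<forall>i<d1. \<forall>j<d1. (\<lambda>q. H1 i j q) holomorphic_on UU N \<and>
            (\<forall>q\<in>UU N. mpow d1 (Eh N V1 q) n i j = (q - xi N) ^ (n div N) * H1 i j q)"
      using mpow_fac[of "Eh N V1" N d1 n] hol_Eh[OF N adm(1)] nilE[OF N adm(1)] N0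
      unfolding d1_def Eh_def by blast
    obtain H2 where H2: "\<forall>i<d2. \<forall>j<d2. (\<lambda>q. H2 i j q) holomorphic_on UU N \<and>
            (\<forall>q\<in>UU N. mpow d2 (Fh N V2 q) n i j = (q - xi N) ^ (n div N) * H2 i j q)"
      using mpow_fac[of "Fh N V2" N d2 n] hol_Fh[OF N adm(2)] nilF[OF N adm(2)] N0
      unfolding d2_def Fh_def by blast
    obtain p u where pu: "p \<le> n div N" "isCont u (xi N)" "u (xi N) \<noteq> 0"
       "\<forall>q. q \<noteq> 0 \<longrightarrow> qcurly_fact n q = (q - xi N) ^ p * u q"
      using qcurly_fact_factor[OF N0, of n] by blast
    define K where "K q = qcurly 1 q ^ (2*n) * q ^ (n * (n - 1) div 2) * H1 i1 j1 q * H2 i2 j2 q / u q" for q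
    have eqT: "Th q = (q - xi N) ^ (2*f - p) * K q" if q: "q \<in> UU N" "q \<noteq> xi N" for q
    proof -
      have qz: "q - xi N \<noteq> 0" using q by simp
      have "Th q = qcurly 1 q ^ (2*n) / ((q - xi N) ^ p * u q) * q ^ (n * (n - 1) div 2)
                   * ((q - xi N) ^ f * H1 i1 j1 q) * ((q - xi N) ^ f * H2 i2 j2 q)"
        unfolding Th_def Rcoef_def using H1 H2 ij pu(4) q UU_nz[OF q(1)] by (simp add: f_def d1_def d2_def)
      also have "\<dots> = ((q - xi N) ^ (2*f - p) * (q - xi N) ^ p) / (q - xi N) ^ p * K q"
      proof -
        have ex: "p + (f * 2 - p) = f + f" "p + (2 * f - p) = f + f" using pu(1) by (simp_all add: f_def)
        show ?thesis unfolding K_def using qz by (simp add: field_simps power_add[symmetric] mult_2 ex)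
      qed
      also have "\<dots> = (q - xi N) ^ (2*f - p) * K q" using qz by simp
      finally show ?thesis .
    qed
    have ev2: "eventually (\<lambda>q. (q - xi N) ^ (2*f - p) * K q = Th q) (at (xi N))"
    proof -
      have "eventually (\<lambda>q. q \<in> UU N - {xi N}) (at (xi N))"
        by (rule eventually_at_in_open[OF open_UU xi_in_UU[OF N0]])
      then show ?thesis by eventually_elim (use eqT in auto)
    qed
    have Kt: "(K \<longlongrightarrow> K (xi N)) (at (xi N))"
    proof -
      have h1: "((\<lambda>q. H1 i1 j1 q) \<longlongrightarrow> H1 i1 j1 (xi N)) (at (xi N))"
        using H1 ij hol_isCont[OF _ N0] unfolding d1_def by blast
      have h2: "((\<lambda>q. H2 i2 j2 q) \<longlongrightarrow> H2 i2 j2 (xi N)) (at (xi N))"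
        using H2 ij hol_isCont[OF _ N0] unfolding d2_def by blast
      have c1: "((\<lambda>q. qcurly 1 q) \<longlongrightarrow> qcurly 1 (xi N)) (at (xi N))"
        using hol_isCont[OF hol_qcurly N0] .
      have ut: "(u \<longlongrightarrow> u (xi N)) (at (xi N))" using pu(2) by (simp add: isCont_def)
      show ?thesis unfolding K_def[abs_def]
        by (intro tendsto_intros c1 h1 h2 ut pu(3))
    qed
    have z: "((\<lambda>q. (q - xi N) ^ (2*f - p)) \<longlongrightarrow> 0) (at (xi N))"
    proof -
      have t: "((\<lambda>q. (q - xi N) ^ (2*f - p)) \<longlongrightarrow> (xi N - xi N) ^ (2*f - p)) (at (xi N))"
        by (intro tendsto_intros)
      have "2*f - p \<noteq> 0" using pu(1) f1 by (simp add: f_def)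
      then have e: "(xi N - xi N) ^ (2*f - p) = (0::complex)" by simp
      show ?thesis using t unfolding e .
    qed
    have "((\<lambda>q. (q - xi N) ^ (2*f - p) * K q) \<longlongrightarrow> 0 * K (xi N)) (at (xi N))"
      by (intro tendsto_mult z Kt)
    then have "(Th \<longlongrightarrow> 0) (at (xi N))" using ev2 by (simp add: Lim_transform_eventually)
    then show ?thesis using False by simp
  qed
  then have "((\<lambda>q. Rcoef n q * mpow d1 (Ematq N V1 q) n i1 j1 * mpow d2 (Fmatq N V2 q) n i2 j2)
      \<longlongrightarrow> (if n < N then Th (xi N) else 0)) (at (xi N))"
    using ev by (rule Lim_transform_eventually)
  moreover have eqTh: "Th (xi N) = Rcoef n (xi N) * mpow d1 (Eh N V1 (xi N)) n i1 j1 * mpow d2 (Fh N V2 (xi N)) n i2 j2"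
    unfolding Th_def ..
  ultimately show ?thesis unfolding d1_def d2_def by metis
qed

lemma sum_if_lt: assumes "N \<le> (D::nat)" shows "(\<Sum>n<D. if n < N then g n else 0) = (\<Sum>n<N. g n)"
proof -
  have "(\<Sum>n<D. if n < N then g n else 0) = (\<Sum>n\<in>{n\<in>{..<D}. n < N}. g n)"
    using sum.inter_filter[of "{..<D}" g "\<lambda>n. n < N"] by simp
  also have "{n\<in>{..<D}. n < N} = {..<N}" using assms by auto
  finally show ?thesis .
qed

theorem mainTheorem5:
  fixes N :: nat and V1 V2 :: qmod and i1 i2 j1 j2 :: nat
  assumes "N \<ge> 2"
    and "admissible N V1" and "admissible N V2"
    and "i1 < qdim N V1" and "j1 < qdim N V1"
    and "i2 < qdim N V2" and "j2 < qdim N V2"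
  shows "((\<lambda>s. Rgen N V1 V2 s i1 i2 j1 j2) \<longlongrightarrow> Rres N V1 V2 i1 i2 j1 j2) (at (xi_half N))"
proof -
  note N = assms(1) and adm = assms(2,3) and ij = assms(4-7)
  define d1 where "d1 = qdim N V1"
  define d2 where "d2 = qdim N V2"
  define T where "T n q = Rcoef n q * mpow d1 (Ematq N V1 q) n i1 j1 * mpow d2 (Fmatq N V2 q) n i2 j2" for n q
  define L where "L n = (if n < N then Rcoef n (xi N) * mpow d1 (Eh N V1 (xi N)) n i1 j1 * mpow d2 (Fh N V2 (xi N)) n i2 j2 else 0)" for n
  define D where "D = d1 + N"
  define w where "w = qwt N V1 i1 * qwt N V2 i2"
  have sumfin: "(\<Sum>n. T n q) = (\<Sum>n<D. T n q)" for q
  proof (rule suminf_finite)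
    fix n assume "n \<notin> {..<D}"
    then have "d1 \<le> n" by (simp add: D_def)
    then have "mpow d1 (Ematq N V1 q) n i1 j1 = 0"
      unfolding Ematq_shape[OF N adm(1)] d1_def using mpow_shapeE_big[OF N adm(1) ij(1,2)] by (simp add: d1_def)
    then show "T n q = 0" by (simp add: T_def)
  qed simp
  have Rg: "Rgen N V1 V2 s i1 i2 j1 j2 = s powi w * (\<Sum>n<D. T n (s^2))" for s
    unfolding Rgen_def sumfin[symmetric] by (simp add: T_def d1_def d2_def w_def)
  have lim1: "((\<lambda>q. \<Sum>n<D. T n q) \<longlongrightarrow> (\<Sum>n<D. L n)) (at (xi N))"
  proof -
    have tl: "((\<lambda>q. T n q) \<longlongrightarrow> L n) (at (xi N))" for n
      unfolding T_def L_def d1_def d2_def by (rule term_lim[OF N adm ij])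
    show ?thesis by (intro tendsto_sum tl)
  qed
  have lim2: "((\<lambda>s. \<Sum>n<D. T n (s^2)) \<longlongrightarrow> (\<Sum>n<D. L n)) (at (xi_half N))"
    using filterlim_compose[OF lim1 filterlim_sq] .
  have lim3: "((\<lambda>s. s powi w) \<longlongrightarrow> xi_half N powi w) (at (xi_half N))"
    by (intro tendsto_power_int tendsto_ident_at xi_half_nz)
  have lim: "((\<lambda>s. Rgen N V1 V2 s i1 i2 j1 j2) \<longlongrightarrow> xi_half N powi w * (\<Sum>n<D. L n)) (at (xi_half N))"
    unfolding Rg by (intro tendsto_mult lim2 lim3)
  have "(\<Sum>n<D. L n) = (\<Sum>n<N. Rcoef n (xi N) * mpow d1 (Eh N V1 (xi N)) n i1 j1 * mpow d2 (Fh N V2 (xi N)) n i2 j2)"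
    unfolding L_def by (rule sum_if_lt) (simp add: D_def)
  then have "xi_half N powi w * (\<Sum>n<D. L n) = Rres N V1 V2 i1 i2 j1 j2"
    unfolding Rres_def Emat_spec_Eh[OF N adm(1)] Fmat_spec_Fh[OF N adm(2)] by (simp add: d1_def d2_def w_def)
  then show ?thesis using lim by simp
qed


end
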